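(* Let $(\Omega,\mathfrak S,\mathbb P,\{T_z:z\in\mathcal G\})$ be a measurable ergodic dynamical system, $\ell\ge0$, and let $g:\Omega\times\mathcal R^\ell\to\mathbb R$ be measurable with $g\in\mathcal L$. Then for $\mathbb P$-a.e. $\omega$ \[\limsup_{n\to\infty}\frac1n\log E_0\big[e^{nR_n^{1,\ell}(g)}\big]\le\sup_{\xi\in\mathcal U\cap\mathbb Q^d}\limsup_{n\to\infty}\frac1n\log E_0\big[e^{nR_n^{1,\ell}(g)}1\{X_n=\hat x_n(\xi)\}\big].\]
   Context: Fix $d$, finite $\mathcal R\subset\mathbb Z^d$, $\mathcal G$ the additive subgroup generated by $\mathcal R$; $T_z$ ($z\in\mathcal G$) measurable commuting bijections with $T_{x+y}=T_xT_y$, $T_0=\mathrm{id}$, $\mathbb P$ invariant and ergodic. $P_0,E_0$: random walk $X_n$ from $0$ with i.i.d. steps $Z_k=X_k-X_{k-1}$ uniform on $\mathcal R$; $Z_{i,j}=(Z_i,\dots,Z_j)$. $nR_n^{1,\ell}(g)=\sum_{k=0}^{n-1}g(T_{X_k}\omega,Z_{k+1,k+\ell})$. $D_n=\{z_1+\dots+z_n:z_{1,n}\in\mathcal R^n\}$, $D_0=\{0\}$. Class $\mathcal L$: $h:\Omega\to\mathbb R$ with $h\in L^1(\mathbb P)$ and, for each nonzero $z\in\mathcal R$, a.s. $\limsup_{\varepsilon\to0}\limsup_n\max_{x\in\cup_{k\le n}D_k}\frac1n\sum_{0\le i\le\varepsilon n}|h\circ T_{x+iz}|=0$; $g$ on $\Omega\times\mathcal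 R^\ell$ is in $\mathcal L$ if each $g(\cdot,z_{1,\ell})$ is. $\mathcal U$ is the convex hull of $\mathcal R$ in $\mathbb R^d$. For each rational $\xi\in\mathcal U$ a positive integer $b(\xi)$ with $b(\xi)\xi\in D_{b(\xi)}$ is fixed, and a path $(\hat x_n(\xi))_{n\ge0}$ with $\hat x_0(\xi)=0$, $\hat x_n(\xi)-\hat x_{n-1}(\xi)\in\mathcal R$, and $\hat x_{jb(\xi)}(\xi)=jb(\xi)\xi$ for all $j\ge0$. *)

theory Defs
  imports "HOL-Probability.Probability"
begin

definition rvec :: "int ^ 'd \<Rightarrow> real ^ 'd" where
  "rvec x = (\<chi> i. real_of_int (x $ i))"

text \<open>Additive subgroup generated by R (R finite).\<close>
definition gen_group :: "(int ^ 'd) set \<Rightarrow> (int ^ 'd) set" where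
  "gen_group R = {\<Sum>r\<in>R. c r *s r | c. True}"

definition paths :: "(int ^ 'd) set \<Rightarrow> nat \<Rightarrow> (int ^ 'd) list set" where
  "paths R m = {zs. set zs \<subseteq> R \<and> length zs = m}"

definition Dset :: "(int ^ 'd) set \<Rightarrow> nat \<Rightarrow> (int ^ 'd) set" where
  "Dset R n = sum_list ` paths R n"

definition walkX :: "(int ^ 'd) list \<Rightarrow> nat \<Rightarrow> int ^ 'd" where
  "walkX zs k = sum_list (take k zs)"

text \<open>E_0 of a function of the first m steps: uniform average over R^m.\<close>
definition E0 :: "(int ^ 'd) set \<Rightarrow> nat \<Rightarrow> ((int ^ 'd) list \<Rightarrow> real) \<Rightarrow> real" where
  "E0 R m F = (\<Sum>zs\<in>paths R m. F zs) / real (card R) ^ m"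

text \<open>n R_n^{1,l}(g) = sum_{k<n} g(T_{X_k} \<omega>, Z_{k+1,k+l}).\<close>
definition nRn :: "(int ^ 'd \<Rightarrow> 'a \<Rightarrow> 'a) \<Rightarrow> ('a \<Rightarrow> (int ^ 'd) list \<Rightarrow> real) \<Rightarrow> nat
    \<Rightarrow> nat \<Rightarrow> 'a \<Rightarrow> (int ^ 'd) list \<Rightarrow> real" where
  "nRn T g l n \<omega> zs = (\<Sum>k<n. g (T (walkX zs k) \<omega>) (take l (drop k zs)))"

definition nlog :: "nat \<Rightarrow> real \<Rightarrow> ereal" where
  "nlog n a = (if a = 0 then -\<infinity> else ereal (ln a / real n))"

definition classL1 :: "'a measure \<Rightarrow> (int ^ 'd) set \<Rightarrow> (int ^ 'd \<Rightarrow> 'a \<Rightarrow> 'a)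
    \<Rightarrow> ('a \<Rightarrow> real) \<Rightarrow> bool" where
  "classL1 M R T h \<longleftrightarrow> integrable M h \<and>
     (\<forall>z\<in>R. z \<noteq> 0 \<longrightarrow>
       (AE \<omega> in M.
         Limsup (at_right (0::real)) (\<lambda>\<epsilon>. Limsup sequentially (\<lambda>n.
           ereal (Max ((\<lambda>x. (1 / real n) * (\<Sum>i\<in>{i::nat. real i \<le> \<epsilon> * real n}.
                 \<bar>h (T (x + int i *s z) \<omega>)\<bar>)) ` (\<Union>k\<le>n. Dset R k))))) = 0))"

definition classL :: "'a measure \<Rightarrow> (int ^ 'd) set \<Rightarrow> (int ^ 'd \<Rightarrow> 'a \<Rightarrow> 'a)
    \<Rightarrow> nat \<Rightarrow> ('a \<Rightarrow> (int ^ 'd) list \<Rightarrow> real) \<Rightarrow> bool" where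
  "classL M R T l g \<longleftrightarrow> (\<forall>zs\<in>paths R l. classL1 M R T (\<lambda>\<omega>. g \<omega> zs))"

definition ergodic_system :: "'a measure \<Rightarrow> (int ^ 'd) set \<Rightarrow> (int ^ 'd \<Rightarrow> 'a \<Rightarrow> 'a) \<Rightarrow> bool" where
  "ergodic_system M G T \<longleftrightarrow> prob_space M \<and>
     (\<forall>z\<in>G. T z \<in> measurable M M \<and> bij_betw (T z) (space M) (space M) \<and> distr M M (T z) = M) \<and>
     (\<forall>x\<in>G. \<forall>y\<in>G. \<forall>\<omega>\<in>space M. T (x + y) \<omega> = T x (T y \<omega>)) \<and>
     (\<forall>\<omega>\<in>space M. T 0 \<omega> = \<omega>) \<and>
     (\<forall>A\<in>sets M. (\<forall>z\<in>G. T z -` A \<inter> space M = A) \<longrightarrow> measure M A = 0 \<or> measure M A = 1)"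

definition rational_vec :: "real ^ 'd \<Rightarrow> bool" where
  "rational_vec \<xi> \<longleftrightarrow> (\<forall>i. \<xi> $ i \<in> \<rat>)"

end

theory Submission
  imports Defs "HOL-Real_Asymp.Real_Asymp"
begin


lemma paths_finite: "finite R \<Longrightarrow> finite (paths R m)"
  unfolding paths_def using finite_lists_length_eq by auto

lemma Dset_finite: "finite R \<Longrightarrow> finite (Dset R m)"
  unfolding Dset_def by (simp add: paths_finite)

lemma paths_nonempty: "R \<noteq> {} \<Longrightarrow> paths R m \<noteq> {}"
proof -
  assume "R \<noteq> {}" then obtain r where "r \<in> R" by auto
  then have "replicate m r \<in> paths R m" by (auto simp: paths_def)
  then show ?thesis by auto
qed

lemma walkX_append1: "k \<le> length p \<Longrightarrow> walkX (p @ ys) k = walkX p k"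
  by (simp add: walkX_def)

lemma walkX_append2: "walkX (p @ ys) (length p + k) = sum_list p + walkX ys k"
  by (simp add: walkX_def)

lemma walkX_Dset: "xs \<in> paths R N \<Longrightarrow> k \<le> N \<Longrightarrow> walkX xs k \<in> Dset R k"
  unfolding Dset_def walkX_def paths_def
  by (rule imageI) (auto dest: in_set_takeD)

lemma window_paths: "xs \<in> paths R N \<Longrightarrow> k + l \<le> N \<Longrightarrow> take l (drop k xs) \<in> paths R l"
  unfolding paths_def by (auto dest!: in_set_takeD in_set_dropD)

lemma of_nat_times_vec: "(of_nat i * z :: int^'d) = int i *s z"
  by (simp add: vec_eq_iff of_nat_index)

lemma Dset_add: "x \<in> Dset R k \<Longrightarrow> r \<in> R \<Longrightarrow> x + int e *s r \<in> Dset R (k + e)"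
proof -
  assume "x \<in> Dset R k" "r \<in> R"
  then obtain xs where xs: "xs \<in> paths R k" "x = sum_list xs" unfolding Dset_def by auto
  have "xs @ replicate e r \<in> paths R (k + e)" using xs `r \<in> R` by (auto simp: paths_def)
  moreover have "sum_list (xs @ replicate e r) = x + int e *s r"
    using xs by (simp add: sum_list_replicate of_nat_times_vec)
  ultimately show ?thesis unfolding Dset_def by (metis image_eqI)
qed

lemma sum_list_count:
  "finite R \<Longrightarrow> set xs \<subseteq> R \<Longrightarrow> sum_list xs = (\<Sum>r\<in>R. int (count (mset xs) r) *s r)"
proof (induction xs)
  case Nil then show ?case by simp
next
  case (Cons x xs)
  then have IH: "sum_list xs = (\<Sum>r\<in>R. int (count (mset xs) r) *s r)" by auto
  have "(\<Sum>r\<in>R. int (count (mset (x # xs)) r) *s r)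
      = (\<Sum>r\<in>R. int (count (mset xs) r) *s r + (if x = r then r else 0))"
    by (rule sum.cong) auto
  also have "\<dots> = sum_list xs + x" using Cons.prems
    by (simp add: sum.distrib IH)
  finally show ?case by (simp add: add.commute)
qed

lemma length_count:
  "finite R \<Longrightarrow> set xs \<subseteq> R \<Longrightarrow> length xs = (\<Sum>r\<in>R. count (mset xs) r)"
proof (induction xs)
  case Nil then show ?case by simp
next
  case (Cons x xs)
  then have IH: "length xs = (\<Sum>r\<in>R. count (mset xs) r)" by auto
  have "(\<Sum>r\<in>R. count (mset (x # xs)) r) = (\<Sum>r\<in>R. count (mset xs) r + (if x = r then 1 else 0))"
    by (rule sum.cong) auto
  also have "\<dots> = length xs + 1" using Cons.prems
    by (simp add: sum.distrib IH)
  finally show ?case by simp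
qed

lemma card_Dset: "finite R \<Longrightarrow> card (Dset R n) \<le> (n + 1) ^ card R"
proof -
  assume fR: "finite R"
  let ?f = "\<lambda>a. (\<Sum>r\<in>R. int (a r) *s r)"
  have "Dset R n \<subseteq> ?f ` (PiE R (\<lambda>_. {..n}))"
  proof
    fix x assume "x \<in> Dset R n"
    then obtain xs where xs: "set xs \<subseteq> R" "length xs = n" "x = sum_list xs"
      unfolding Dset_def paths_def by auto
    let ?a = "restrict (\<lambda>r. count (mset xs) r) R"
    have "?a \<in> PiE R (\<lambda>_. {..n})"
    proof -
      have "count (mset xs) r \<le> n" if "r \<in> R" for r
        using length_count[OF fR xs(1)] xs(2) member_le_sum[of r R "\<lambda>r. count (mset xs) r"] fR that
        by auto
      then show ?thesis by auto
    qed
    moreover have "x = ?f ?a" using sum_list_count[OF fR xs(1)] xs(3)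
      by (auto intro: sum.cong)
    ultimately show "x \<in> ?f ` (PiE R (\<lambda>_. {..n}))" by blast
  qed
  then have "card (Dset R n) \<le> card (?f ` (PiE R (\<lambda>_. {..n})))"
    by (intro card_mono finite_imageI finite_PiE) (auto simp: fR)
  also have "\<dots> \<le> card (PiE R (\<lambda>_. {..n}::nat set))" by (rule card_image_le) (auto simp: fR intro: finite_PiE)
  also have "\<dots> = (n + 1) ^ card R" by (simp add: card_PiE fR)
  finally show ?thesis .
qed

lemma Dset_nonempty: "R \<noteq> {} \<Longrightarrow> Dset R n \<noteq> {}"
  unfolding Dset_def using paths_nonempty by auto



definition Hs :: "(int^'d \<Rightarrow> (int^'d) list \<Rightarrow> real) \<Rightarrow> nat \<Rightarrow> nat \<Rightarrow> (int^'d) list \<Rightarrow> real" where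
  "Hs \<phi> l n zs = (\<Sum>k<n. \<phi> (walkX zs k) (take l (drop k zs)))"

definition Gf :: "(int^'d) set \<Rightarrow> nat \<Rightarrow> (int^'d \<Rightarrow> (int^'d) list \<Rightarrow> real) \<Rightarrow> int^'d \<Rightarrow> real" where
  "Gf R l \<phi> y = (\<Sum>w\<in>paths R l. \<bar>\<phi> y w\<bar>)"

lemma Gf_nonneg: "0 \<le> Gf R l \<phi> y"
  unfolding Gf_def by (rule sum_nonneg) auto

lemma Gf_bound: "finite R \<Longrightarrow> w \<in> paths R l \<Longrightarrow> \<bar>\<phi> y w\<bar> \<le> Gf R l \<phi> y"
  unfolding Gf_def by (rule member_le_sum[of w _ "\<lambda>w. \<bar>\<phi> y w\<bar>"]) (auto simp: paths_finite)

lemma sum_split_add: "(\<Sum>k<a+b. f k) = (\<Sum>k<a. f k) + (\<Sum>k<b. f (a + k::nat)) " for f :: "nat \<Rightarrow> real"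
  by (induction b) (auto simp: ac_simps)

lemma walkX_zeros: "k \<le> e \<Longrightarrow> walkX (replicate e 0 @ ys) k = 0"
  by (simp add: walkX_def sum_list_replicate)

lemma surgery:
  fixes \<phi> :: "int^'d \<Rightarrow> (int^'d) list \<Rightarrow> real"
  assumes fR: "finite R"
    and zs: "zs \<in> paths R (n + l)"
    and pre: "e0 > 0 \<Longrightarrow> 0 \<in> R"
    and route: "route \<in> paths R q"
    and Bb: "\<And>k. k < n \<Longrightarrow> n < k + l \<Longrightarrow> Gf R l \<phi> (walkX zs k) \<le> B"
    and Qb: "(\<Sum>k<q. Gf R l \<phi> (walkX zs n + walkX route k)) \<le> Q"
    and B0: "0 \<le> B"
  shows "Hs \<phi> l n zs \<le> Hs \<phi> l (e0 + n + q) (replicate e0 0 @ take n zs @ route @ drop n zs)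
            + real e0 * Gf R l \<phi> 0 + 2 * real l * B + Q"
proof -
  define rest where "rest = take n zs @ route @ drop n zs"
  define xs where "xs = replicate e0 0 @ rest"
  have lzs: "length zs = n + l" and szs: "set zs \<subseteq> R" using zs by (auto simp: paths_def)
  have lrest: "length rest = n + q + l" using lzs route by (auto simp: rest_def paths_def)
  have rest_p: "rest \<in> paths R (n + q + l)" using lrest szs route
    by (auto simp: rest_def paths_def dest: in_set_takeD in_set_dropD)
  have xs_p: "xs \<in> paths R (e0 + n + q + l)" using rest_p pre
    by (cases "e0 = 0") (auto simp: xs_def paths_def)
  let ?H = "\<lambda>xs k. \<phi> (walkX xs k) (take l (drop k xs))"
  have split1: "Hs \<phi> l (e0 + (n + q)) xs = (\<Sum>k<e0. ?H xs k) + (\<Sum>k<n + q. ?H xs (e0 + k))"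
    unfolding Hs_def by (rule sum_split_add)
  have shift: "?H xs (e0 + k) = ?H rest k" for k
  proof -
    have "walkX xs (e0 + k) = walkX rest k"
      using walkX_append2[of "replicate e0 0" rest k] by (simp add: xs_def sum_list_replicate)
    moreover have "drop (e0 + k) xs = drop k rest" by (simp add: xs_def sum_list_replicate)
    ultimately show ?thesis by simp
  qed
  have part1: "(\<Sum>k<e0. ?H xs k) \<ge> - (real e0 * Gf R l \<phi> 0)"
  proof -
    have "?H xs k \<ge> - Gf R l \<phi> 0" if "k < e0" for k
    proof -
      have "walkX xs k = 0" using that walkX_zeros[of k e0 rest] by (simp add: xs_def sum_list_replicate)
      moreover have "take l (drop k xs) \<in> paths R l"
        using xs_p that by (intro window_paths[of _ _ "e0 + n + q + l"]) auto
      ultimately show ?thesis using Gf_bound[OF fR, of "take l (drop k xs)" l \<phi> 0] by auto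
    qed
    then have "(\<Sum>k<e0. ?H xs k) \<ge> (\<Sum>k<e0. - Gf R l \<phi> 0)" by (intro sum_mono) auto
    then show ?thesis by simp
  qed
  have split2: "(\<Sum>k<n + q. ?H rest k) = (\<Sum>k<n. ?H rest k) + (\<Sum>k<q. ?H rest (n + k))"
    by (rule sum_split_add)
  have part2: "(\<Sum>k<n. ?H rest k) \<ge> Hs \<phi> l n zs - 2 * real l * B"
  proof -
    have tk: "take k rest = take k zs" if "k \<le> n" for k
      using that lzs by (simp add: rest_def min_def)
    have wk: "walkX rest k = walkX zs k" if "k \<le> n" for k
      using tk[OF that] by (simp add: walkX_def)
    have "?H zs k - ?H rest k \<le> (if n < k + l then 2 * B else 0)" if "k < n" for k
    proof (cases "n < k + l")
      case True
      have "take l (drop k rest) \<in> paths R l"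
        using rest_p that by (intro window_paths[of _ _ "n + q + l"]) auto
      moreover have "take l (drop k zs) \<in> paths R l"
        using zs that True by (intro window_paths[of _ _ "n + l"]) auto
      ultimately have "\<bar>?H rest k\<bar> \<le> B" "\<bar>?H zs k\<bar> \<le> B"
        using Gf_bound[OF fR] Bb[OF that True] wk[of k] that by (metis less_imp_le order_trans)+
      then show ?thesis using True by auto
    next
      case False
      then have "take l (drop k rest) = take l (drop k zs)"
      proof -
        have "take l (drop k rest) = take l (drop k (take n zs))"
          using False lzs by (simp add: rest_def)
        also have "\<dots> = take l (drop k zs)" using False by (simp add: drop_take take_take min_def)
        finally show ?thesis .
      qed
      then show ?thesis using wk[of k] that B0 by simp
    qed
    then have "(\<Sum>k<n. ?H zs k - ?H rest k) \<le> (\<Sum>k<n. if n < k + l then 2 * B else 0)"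
      by (intro sum_mono) auto
    also have "\<dots> = 2 * B * real (card {k\<in>{..<n}. n < k + l})"
      by (simp add: sum.If_cases Int_def conj_commute)
    also have "\<dots> \<le> 2 * B * real l"
    proof -
      have "{k\<in>{..<n}. n < k + l} \<subseteq> {n - l..<n}" by auto
      then have "card {k\<in>{..<n}. n < k + l} \<le> l"
        by (metis card_atLeastLessThan card_mono diff_diff_cancel diff_le_self finite_atLeastLessThan le_trans nat_le_linear)
      then show ?thesis using B0 by (simp add: mult_left_mono)
    qed
    finally show ?thesis by (simp add: Hs_def sum_subtractf algebra_simps)
  qed
  have part3: "(\<Sum>k<q. ?H rest (n + k)) \<ge> - Q"
  proof -
    have "?H rest (n + k) \<ge> - Gf R l \<phi> (walkX zs n + walkX route k)" if "k < q" for k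
    proof -
      have "walkX rest (n + k) = sum_list (take n zs) + walkX (route @ drop n zs) k"
        using walkX_append2[of "take n zs" "route @ drop n zs" k] lzs by (simp add: rest_def)
      also have "\<dots> = walkX zs n + walkX route k"
        using that route walkX_append1[of k route "drop n zs"] by (simp add: walkX_def paths_def)
      finally have w: "walkX rest (n + k) = walkX zs n + walkX route k" .
      have "take l (drop (n + k) rest) \<in> paths R l"
        using rest_p that by (intro window_paths[of _ _ "n + q + l"]) auto
      then show ?thesis using Gf_bound[OF fR] w by (metis abs_le_iff minus_le_iff)
    qed
    then have "(\<Sum>k<q. ?H rest (n + k)) \<ge> (\<Sum>k<q. - Gf R l \<phi> (walkX zs n + walkX route k))"
      by (intro sum_mono) auto
    then show ?thesis using Qb by (simp add: sum_negf)
  qed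
  have "Hs \<phi> l (e0 + n + q) xs = (\<Sum>k<e0. ?H xs k) + (\<Sum>k<n + q. ?H rest k)"
    using split1 shift by (simp add: add.assoc)
  then show ?thesis using part1 part2 part3 split2 unfolding xs_def rest_def by linarith
qed



definition route :: "(int^'d) list \<Rightarrow> (int^'d \<Rightarrow> nat) \<Rightarrow> (int^'d) list" where
  "route rs e = concat (map (\<lambda>r. replicate (e r) r) rs)"

lemma route_Cons: "route (r # rs) e = replicate (e r) r @ route rs e"
  by (simp add: route_def)

lemma route_length: "length (route rs e) = sum_list (map e rs)"
  by (induction rs) (auto simp: route_def)

lemma route_set: "set (route rs e) \<subseteq> set rs"
  by (auto simp: route_def)

lemma route_sum: "sum_list (route rs e) = sum_list (map (\<lambda>r. int (e r) *s r) rs)"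
  by (induction rs) (auto simp: route_def sum_list_replicate of_nat_times_vec)

lemma walkX_replicate: "j \<le> e \<Longrightarrow> walkX (replicate e r @ ys) j = int j *s r"
  by (simp add: walkX_def sum_list_replicate of_nat_times_vec min_def)

lemma route_bound:
  fixes G :: "int^'d \<Rightarrow> real"
  assumes blk: "\<And>y z e'. y \<in> (\<Union>k\<le>m. Dset R k) \<Longrightarrow> z \<in> R \<Longrightarrow> z \<noteq> 0 \<Longrightarrow> e' \<le> E
                  \<Longrightarrow> (\<Sum>i<e'. G (y + int i *s z)) \<le> B"
    and rs: "set rs \<subseteq> R - {0}" and eb: "\<forall>r\<in>set rs. e r \<le> E"
  shows "x \<in> Dset R k \<Longrightarrow> k + sum_list (map e rs) \<le> m \<Longrightarrow>
     (\<Sum>j<length (route rs e). G (x + walkX (route rs e) j)) \<le> real (length rs) * B"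
  using rs eb
proof (induction rs arbitrary: x k)
  case Nil then show ?case by (simp add: route_def)
next
  case (Cons r rs)
  let ?rep = "replicate (e r) r" and ?rt = "route rs e"
  have "(\<Sum>j<length (route (r # rs) e). G (x + walkX (route (r # rs) e) j))
      = (\<Sum>j<e r. G (x + walkX (?rep @ ?rt) j)) + (\<Sum>j<length ?rt. G (x + walkX (?rep @ ?rt) (e r + j)))"
    unfolding route_Cons by (simp add: sum_split_add)
  also have "(\<Sum>j<e r. G (x + walkX (?rep @ ?rt) j)) = (\<Sum>j<e r. G (x + int j *s r))"
    by (rule sum.cong) (auto simp: walkX_replicate)
  also have "(\<Sum>j<length ?rt. G (x + walkX (?rep @ ?rt) (e r + j)))
       = (\<Sum>j<length ?rt. G ((x + int (e r) *s r) + walkX ?rt j))"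
    using walkX_append2[of ?rep ?rt] by (simp add: sum_list_replicate of_nat_times_vec add.assoc)
  also have "(\<Sum>j<e r. G (x + int j *s r)) \<le> B"
    using Cons.prems by (intro blk) auto
  also have "(\<Sum>j<length ?rt. G ((x + int (e r) *s r) + walkX ?rt j)) \<le> real (length rs) * B"
    using Cons.prems by (intro Cons.IH[of _ "k + e r"] Dset_add) auto
  finally show ?case by (simp add: algebra_simps)
qed



lemma rvec_add: "rvec (x + y) = rvec x + rvec y" by (simp add: rvec_def vec_eq_iff)
lemma rvec_zero: "rvec 0 = 0" by (simp add: rvec_def vec_eq_iff)
lemma rvec_smult: "rvec (c *s x) = real_of_int c *\<^sub>R rvec x" by (simp add: rvec_def vec_eq_iff)
lemma rvec_sum: "rvec (\<Sum>r\<in>A. f r) = (\<Sum>r\<in>A. rvec (f r))"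
  by (induction A rule: infinite_finite_induct) (auto simp: rvec_zero rvec_add)
lemma rvec_inj: "rvec x = rvec y \<Longrightarrow> x = y" by (simp add: rvec_def vec_eq_iff)

lemma grid_point:
  fixes R :: "(int^'d) set" and j :: "int^'d \<Rightarrow> nat"
  assumes fR: "finite R" and Rne: "R \<noteq> {}"
  defines "J \<equiv> (\<Sum>r\<in>R. j r + 2)"
  defines "\<xi> \<equiv> (\<Sum>r\<in>R. (real (j r + 2) / real J) *\<^sub>R rvec r)"
  shows "rational_vec \<xi> \<and> \<xi> \<in> convex hull (rvec ` R)"
proof
  show "rational_vec \<xi>" unfolding rational_vec_def \<xi>_def
    by (auto simp: rvec_def intro!: Rats_sum Rats_mult Rats_divide)
  have Jpos: "J > 0" using fR Rne by (simp add: J_def sum_pos)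
  have "(\<Sum>r\<in>R. real (j r + 2) / real J) = (\<Sum>r\<in>R. real (j r + 2)) / real J"
    by (simp only: sum_divide_distrib)
  also have "(\<Sum>r\<in>R. real (j r + 2)) = real J" by (simp only: J_def of_nat_sum)
  finally have "(\<Sum>r\<in>R. real (j r + 2) / real J) = 1" using Jpos by simp
  then show "\<xi> \<in> convex hull (rvec ` R)" unfolding \<xi>_def
    by (intro convex_sum fR convex_convex_hull) (auto intro: hull_inc)
qed

lemma grid_target:
  fixes R :: "(int^'d) set" and j :: "int^'d \<Rightarrow> nat"
  assumes fR: "finite R"
  assumes J_def: "J = (\<Sum>r\<in>R. j r + 2)"
  assumes \<xi>_def: "\<xi> = (\<Sum>r\<in>R. (real (j r + 2) / real J) *\<^sub>R rvec r)"
  assumes xp: "\<forall>i. rvec (xhat (i * bb)) = real (i * bb) *\<^sub>R \<xi>"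
    and m: "m = J * bb * t"
  shows "(\<Sum>r\<in>R. int ((j r + 2) * (m div J)) *s r) = xhat m"
    and "(\<Sum>r\<in>R. (j r + 2) * (m div J)) = m"
proof -
  show "(\<Sum>r\<in>R. (j r + 2) * (m div J)) = m"
  proof (cases "J = 0")
    case True then show ?thesis using m by simp
  next
    case False
    then have "m div J = bb * t" using m by simp
    then have "(\<Sum>r\<in>R. (j r + 2) * (m div J)) = (\<Sum>r\<in>R. (j r + 2)) * (bb * t)"
      by (simp only: sum_distrib_right)
    then show ?thesis using m by (simp only: J_def mult.assoc)
  qed
  have "rvec (\<Sum>r\<in>R. int ((j r + 2) * (m div J)) *s r)
       = (\<Sum>r\<in>R. real ((j r + 2) * (m div J)) *\<^sub>R rvec r)"
    unfolding rvec_sum rvec_smult by simp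
  also have "\<dots> = real m *\<^sub>R \<xi>"
  proof (cases "J = 0")
    case True then show ?thesis using m fR by (simp add: J_def)
  next
    case False
    then have md: "real (m div J) = real m / real J" using m by (simp add: real_of_nat_div)
    have "(\<Sum>r\<in>R. real ((j r + 2) * (m div J)) *\<^sub>R rvec r)
        = (\<Sum>r\<in>R. real m *\<^sub>R ((real (j r + 2) / real J) *\<^sub>R rvec r))"
    proof (rule sum.cong)
      fix r assume "r \<in> R"
      have "real ((j r + 2) * (m div J)) = real m * (real (j r + 2) / real J)"
        by (simp only: of_nat_mult md) simp
      then show "real ((j r + 2) * (m div J)) *\<^sub>R rvec r = real m *\<^sub>R ((real (j r + 2) / real J) *\<^sub>R rvec r)"
        by simp
    qed simp
    then show ?thesis by (simp add: \<xi>_def scaleR_sum_right)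
  qed
  also have "\<dots> = rvec (xhat m)" using xp[rule_format, of "J * t"] m by (simp add: ac_simps)
  finally show "(\<Sum>r\<in>R. int ((j r + 2) * (m div J)) *s r) = xhat m" by (rule rvec_inj)
qed



lemma transfer:
  fixes \<phi> :: "int^'d \<Rightarrow> (int^'d) list \<Rightarrow> real"
  assumes fR: "finite R"
    and pre: "e0 > 0 \<Longrightarrow> 0 \<in> R"
    and rt: "rt \<in> paths R q"
    and xy: "x + sum_list rt = y"
    and m: "m = e0 + n + q"
    and Bb: "\<And>zs k. zs \<in> paths R (n + l) \<Longrightarrow> k < n \<Longrightarrow> Gf R l \<phi> (walkX zs k) \<le> B"
    and Qb: "(\<Sum>k<q. Gf R l \<phi> (x + walkX rt k)) \<le> Q"
    and B0: "0 \<le> B"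
  shows "(\<Sum>zs\<in>{zs\<in>paths R (n + l). walkX zs n = x}. exp (Hs \<phi> l n zs))
     \<le> exp (real e0 * Gf R l \<phi> 0 + 2 * real l * B + Q) *
        (\<Sum>zs\<in>paths R (m + l). exp (Hs \<phi> l m zs) * (if walkX zs m = y then 1 else 0))"
proof -
  define A where "A = {zs\<in>paths R (n + l). walkX zs n = x}"
  define \<Phi> where "\<Phi> zs = replicate e0 0 @ take n zs @ rt @ drop n zs" for zs
  define C where "C = real e0 * Gf R l \<phi> 0 + 2 * real l * B + Q"
  have lr: "length rt = q" and sr: "set rt \<subseteq> R" using rt by (auto simp: paths_def)
  have inA: "zs \<in> paths R (n + l)" "walkX zs n = x" if "zs \<in> A" for zs using that by (auto simp: A_def)
  have lzs: "length zs = n + l" if "zs \<in> A" for zs using inA[OF that] by (auto simp: paths_def)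
  have Phi_p: "\<Phi> zs \<in> paths R (m + l)" if "zs \<in> A" for zs
    using inA[OF that] lzs[OF that] rt pre m
    by (cases "e0 = 0") (auto simp: \<Phi>_def paths_def dest: in_set_takeD in_set_dropD)
  have Phi_w: "walkX (\<Phi> zs) m = y" if "zs \<in> A" for zs
  proof -
    have "walkX (\<Phi> zs) m = walkX (replicate e0 0 @ (take n zs @ rt @ drop n zs)) (e0 + (n + q))"
      using m by (simp add: \<Phi>_def add.assoc)
    also have "\<dots> = walkX (take n zs @ rt @ drop n zs) (n + q)"
      using walkX_append2[of "replicate e0 0"] by (simp add: sum_list_replicate)
    also have "\<dots> = sum_list (take n zs) + sum_list rt"
      using lzs[OF that] lr by (simp add: walkX_def)
    also have "sum_list (take n zs) = x" using inA(2)[OF that] by (simp add: walkX_def)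
    finally show ?thesis using xy by simp
  qed
  have inj: "inj_on \<Phi> A"
  proof (rule inj_onI)
    fix a b assume a: "a \<in> A" and b: "b \<in> A" and e: "\<Phi> a = \<Phi> b"
    have "take n (drop e0 (\<Phi> a)) = take n a" using lzs[OF a] by (simp add: \<Phi>_def)
    moreover have "take n (drop e0 (\<Phi> b)) = take n b" using lzs[OF b] by (simp add: \<Phi>_def)
    moreover have "drop (e0 + n + q) (\<Phi> a) = drop n a" using lzs[OF a] lr by (simp add: \<Phi>_def)
    moreover have "drop (e0 + n + q) (\<Phi> b) = drop n b" using lzs[OF b] lr by (simp add: \<Phi>_def)
    ultimately have "take n a = take n b" "drop n a = drop n b" using e by metis+
    then show "a = b" by (metis append_take_drop_id)
  qed
  have pt: "exp (Hs \<phi> l n zs) \<le> exp C * exp (Hs \<phi> l m (\<Phi> zs))" if "zs \<in> A" for zs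
  proof -
    have "Hs \<phi> l n zs \<le> Hs \<phi> l (e0 + n + q) (\<Phi> zs) + real e0 * Gf R l \<phi> 0 + 2 * real l * B + Q"
      unfolding \<Phi>_def
      using inA[OF that] by (intro surgery[OF fR _ pre rt _ _ B0]) (auto intro: Bb simp: Qb)
    then have "Hs \<phi> l n zs \<le> Hs \<phi> l (e0 + n + q) (\<Phi> zs) + C" by (simp add: C_def)
    then show ?thesis using m by (simp add: exp_add[symmetric] add.commute)
  qed
  have "(\<Sum>zs\<in>A. exp (Hs \<phi> l n zs)) \<le> (\<Sum>zs\<in>A. exp C * exp (Hs \<phi> l m (\<Phi> zs)))"
    by (intro sum_mono pt)
  also have "\<dots> = exp C * (\<Sum>w\<in>\<Phi> ` A. exp (Hs \<phi> l m w))"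
    by (simp add: sum_distrib_left sum.reindex[OF inj])
  also have "(\<Sum>w\<in>\<Phi> ` A. exp (Hs \<phi> l m w))
      = (\<Sum>w\<in>\<Phi> ` A. exp (Hs \<phi> l m w) * (if walkX w m = y then 1 else 0))"
    by (rule sum.cong) (auto simp: Phi_w)
  also have "\<dots> \<le> (\<Sum>w\<in>paths R (m + l). exp (Hs \<phi> l m w) * (if walkX w m = y then 1 else 0))"
    by (intro sum_mono2) (auto simp: paths_finite fR Phi_p)
  finally show ?thesis by (simp add: A_def C_def mult_left_mono)
qed



lemma finite_le_eps: "finite {i::nat. real i \<le> c}"
proof -
  have "{i::nat. real i \<le> c} \<subseteq> {..nat \<lceil>c\<rceil>}"
  proof
    fix x assume "x \<in> {i::nat. real i \<le> c}"
    then have "real x \<le> c" by simp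
    then have "real_of_int (int x) \<le> real_of_int \<lceil>c\<rceil>" using le_of_int_ceiling[of c] by linarith
    then have "int x \<le> \<lceil>c\<rceil>" by (simp only: of_int_le_iff)
    then show "x \<in> {..nat \<lceil>c\<rceil>}" by simp
  qed
  then show ?thesis by (rule finite_subset) simp
qed

lemma classL_extract:
  fixes \<phi> :: "int^'d \<Rightarrow> (int^'d) list \<Rightarrow> real"
  assumes fR: "finite R"
    and hL: "\<forall>w\<in>paths R l. \<forall>z\<in>R. z \<noteq> 0 \<longrightarrow>
      Limsup (at_right (0::real)) (\<lambda>\<epsilon>. Limsup sequentially (\<lambda>n.
           ereal (Max ((\<lambda>x. (1 / real n) * (\<Sum>i\<in>{i::nat. real i \<le> \<epsilon> * real n}.
                 \<bar>\<phi> (x + int i *s z) w\<bar>)) ` (\<Union>k\<le>n. Dset R k))))) = 0"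
    and eta: "\<eta> > 0"
  obtains \<epsilon> N where "\<epsilon> > 0" and "\<forall>m\<ge>N. \<forall>y\<in>(\<Union>k\<le>m. Dset R k). \<forall>z\<in>R. z \<noteq> 0 \<longrightarrow> (\<forall>e'. real e' \<le> \<epsilon> * real m \<longrightarrow>
           (\<Sum>i<e'. Gf R l \<phi> (y + int i *s z)) \<le> real (card (paths R l)) * \<eta> * real m)"
proof -
  define S where "S = paths R l \<times> (R - {0})"
  have fS: "finite S" using fR by (simp add: S_def paths_finite)
  define Mx where "Mx w z \<epsilon> n = Max ((\<lambda>x. (1 / real n) * (\<Sum>i\<in>{i::nat. real i \<le> \<epsilon> * real n}.
                 \<bar>\<phi> (x + int i *s z) w\<bar>)) ` (\<Union>k\<le>n. Dset R k))" for w z \<epsilon> n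
  have "\<forall>p\<in>S. eventually (\<lambda>\<epsilon>. Limsup sequentially (\<lambda>n. ereal (Mx (fst p) (snd p) \<epsilon> n)) < ereal \<eta>) (at_right (0::real))"
  proof
    fix p assume "p \<in> S"
    then obtain w z where p: "p = (w, z)" "w \<in> paths R l" "z \<in> R" "z \<noteq> 0" by (auto simp: S_def)
    have "Limsup (at_right (0::real)) (\<lambda>\<epsilon>. Limsup sequentially (\<lambda>n. ereal (Mx w z \<epsilon> n))) = 0"
      unfolding Mx_def using hL p(2,3,4) by blast
    then have "Limsup (at_right (0::real)) (\<lambda>\<epsilon>. Limsup sequentially (\<lambda>n. ereal (Mx (fst p) (snd p) \<epsilon> n))) < ereal \<eta>"
      using eta p(1) by simp
    then show "eventually (\<lambda>\<epsilon>. Limsup sequentially (\<lambda>n. ereal (Mx (fst p) (snd p) \<epsilon> n)) < ereal \<eta>) (at_right (0::real))"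
      by (rule Limsup_lessD)
  qed
  then have "eventually (\<lambda>\<epsilon>. \<forall>p\<in>S. Limsup sequentially (\<lambda>n. ereal (Mx (fst p) (snd p) \<epsilon> n)) < ereal \<eta>) (at_right (0::real))"
    by (rule eventually_ball_finite[OF fS])
  then obtain b where b: "b > 0" "\<And>\<epsilon>. \<epsilon> > 0 \<Longrightarrow> \<epsilon> < b \<Longrightarrow> \<forall>p\<in>S. Limsup sequentially (\<lambda>n. ereal (Mx (fst p) (snd p) \<epsilon> n)) < ereal \<eta>"
    unfolding eventually_at_right_field by auto
  define \<epsilon> where "\<epsilon> = b / 2"
  have ep: "\<epsilon> > 0" using b by (simp add: \<epsilon>_def)
  have "\<forall>p\<in>S. eventually (\<lambda>n. ereal (Mx (fst p) (snd p) \<epsilon> n) < ereal \<eta>) sequentially"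
  proof
    fix p assume "p \<in> S"
    then have "Limsup sequentially (\<lambda>n. ereal (Mx (fst p) (snd p) \<epsilon> n)) < ereal \<eta>"
      using b(2)[of \<epsilon>] b(1) ep by (auto simp: \<epsilon>_def)
    then show "eventually (\<lambda>n. ereal (Mx (fst p) (snd p) \<epsilon> n) < ereal \<eta>) sequentially"
      by (rule Limsup_lessD)
  qed
  then have "eventually (\<lambda>n. \<forall>p\<in>S. ereal (Mx (fst p) (snd p) \<epsilon> n) < ereal \<eta>) sequentially"
    by (rule eventually_ball_finite[OF fS])
  then obtain N where N: "\<And>n p. n \<ge> N \<Longrightarrow> p \<in> S \<Longrightarrow> Mx (fst p) (snd p) \<epsilon> n < \<eta>"
    unfolding eventually_sequentially by auto
  have "\<forall>m\<ge>Suc N. \<forall>y\<in>(\<Union>k\<le>m. Dset R k). \<forall>z\<in>R. z \<noteq> 0 \<longrightarrow> (\<forall>e'. real e' \<le> \<epsilon> * real m \<longrightarrow>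
           (\<Sum>i<e'. Gf R l \<phi> (y + int i *s z)) \<le> real (card (paths R l)) * \<eta> * real m)"
  proof (intro allI impI ballI)
    fix m y z e' assume m: "Suc N \<le> m" and y: "y \<in> (\<Union>k\<le>m. Dset R k)" and z: "z \<in> R" "z \<noteq> 0"
      and e': "real e' \<le> \<epsilon> * real m"
    have mpos: "real m > 0" using m by simp
    have one: "(\<Sum>i<e'. \<bar>\<phi> (y + int i *s z) w\<bar>) \<le> \<eta> * real m" if w: "w \<in> paths R l" for w
    proof -
      have "(\<Sum>i<e'. \<bar>\<phi> (y + int i *s z) w\<bar>) \<le> (\<Sum>i\<in>{i::nat. real i \<le> \<epsilon> * real m}. \<bar>\<phi> (y + int i *s z) w\<bar>)"
        using e' by (intro sum_mono2 finite_le_eps) auto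
      also have "\<dots> = real m * ((1 / real m) * (\<Sum>i\<in>{i::nat. real i \<le> \<epsilon> * real m}. \<bar>\<phi> (y + int i *s z) w\<bar>))"
        using mpos by simp
      also have "\<dots> \<le> real m * Mx w z \<epsilon> m"
        unfolding Mx_def using y mpos
        by (intro mult_left_mono Max_ge finite_imageI) (auto simp: Dset_finite fR)
      also have "\<dots> \<le> real m * \<eta>"
        using N[of m "(w, z)"] m w z mpos by (intro mult_left_mono) (auto simp: S_def)
      finally show ?thesis by (simp add: mult.commute)
    qed
    have "(\<Sum>i<e'. Gf R l \<phi> (y + int i *s z)) = (\<Sum>w\<in>paths R l. \<Sum>i<e'. \<bar>\<phi> (y + int i *s z) w\<bar>)"
      unfolding Gf_def by (rule sum.swap)
    also have "\<dots> \<le> (\<Sum>w\<in>paths R l. \<eta> * real m)" by (intro sum_mono one)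
    also have "\<dots> = real (card (paths R l)) * \<eta> * real m" by simp
    finally show "(\<Sum>i<e'. Gf R l \<phi> (y + int i *s z)) \<le> real (card (paths R l)) * \<eta> * real m" .
  qed
  then show thesis by (rule that[OF ep])
qed



lemma div_real_le: "n > 0 \<Longrightarrow> real (x div n) \<le> real x / real n"
proof -
  assume n: "n > 0"
  have "x div n * n \<le> x" using div_mult_mod_eq[of x n] by linarith
  then have "real (x div n) * real n \<le> real x" by (metis of_nat_le_iff of_nat_mult)
  then show ?thesis using n by (simp add: pos_le_divide_eq)
qed

lemma div_real_gt: "n > 0 \<Longrightarrow> real x / real n < real (x div n) + 1"
proof -
  assume n: "n > 0"
  have "x < x div n * n + n" using div_mult_mod_eq[of x n] mod_less_divisor[OF n, of x] by linarith
  then have "real x < (real (x div n) + 1) * real n" by (simp add: algebra_simps) (metis of_nat_add of_nat_less_iff of_nat_mult)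
  then show ?thesis using n by (simp add: pos_divide_less_eq)
qed

definition gJ :: "(int^'d) set \<Rightarrow> (int^'d \<Rightarrow> nat) \<Rightarrow> nat" where
  "gJ R j = (\<Sum>r\<in>R. j r + 2)"
definition gxi :: "(int^'d) set \<Rightarrow> (int^'d \<Rightarrow> nat) \<Rightarrow> real^'d" where
  "gxi R j = (\<Sum>r\<in>R. (real (j r + 2) / real (gJ R j)) *\<^sub>R rvec r)"
definition gL :: "(int^'d) set \<Rightarrow> (real^'d \<Rightarrow> nat) \<Rightarrow> (int^'d \<Rightarrow> nat) \<Rightarrow> nat" where
  "gL R b j = gJ R j * b (gxi R j)"
definition gm :: "(int^'d) set \<Rightarrow> (real^'d \<Rightarrow> nat) \<Rightarrow> nat \<Rightarrow> (int^'d \<Rightarrow> nat) \<Rightarrow> nat \<Rightarrow> nat" where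
  "gm R b K j n = gL R b j * (n * gJ R j div (K * gL R b j) + 1)"

lemma construct:
  fixes R :: "(int^'d) set" and a :: "int^'d \<Rightarrow> nat"
  assumes fR: "finite R" and Rne: "R \<noteq> {}" and K: "K > 0" and n: "n > 0"
    and asum: "(\<Sum>r\<in>R. a r) = n"
    and bpos: "\<forall>\<xi>. rational_vec \<xi> \<and> \<xi> \<in> convex hull (rvec ` R) \<longrightarrow>
        0 < b \<xi> \<and> (\<exists>x\<in>Dset R (b \<xi>). rvec x = real (b \<xi>) *\<^sub>R \<xi>)"
    and xpath: "\<forall>\<xi>. rational_vec \<xi> \<and> \<xi> \<in> convex hull (rvec ` R) \<longrightarrow>
        xhat \<xi> 0 = 0 \<and> (\<forall>n. xhat \<xi> (Suc n) - xhat \<xi> n \<in> R) \<and>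
        (\<forall>j. rvec (xhat \<xi> (j * b \<xi>)) = real (j * b \<xi>) *\<^sub>R \<xi>)"
  defines "j \<equiv> restrict (\<lambda>r. K * a r div n) R"
  defines "m \<equiv> gm R b K j n"
  shows "j \<in> PiE R (\<lambda>_. {..K})"
    and "n \<le> m"
    and "real m \<le> real n + 2 * real (card R) * real n / real K + real (gL R b j)"
    and "\<exists>e0 rs e. (e0 > 0 \<longrightarrow> 0 \<in> R) \<and> set rs \<subseteq> R - {0} \<and> length rs \<le> card R \<and>
          route rs e \<in> paths R (sum_list (map e rs)) \<and>
          (\<Sum>r\<in>R. int (a r) *s r) + sum_list (route rs e) = xhat (gxi R j) m \<and>
          m = e0 + n + sum_list (map e rs) \<and> e0 \<le> m - n \<and> (\<forall>r\<in>set rs. e r \<le> m - n)"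
proof -
  have ar: "a r \<le> n" if "r \<in> R" for r
    using asum member_le_sum[of r R a] fR that by auto
  show jK: "j \<in> PiE R (\<lambda>_. {..K})"
  proof -
    have "K * a r div n \<le> K" if "r \<in> R" for r
    proof -
      have "K * a r div n \<le> K * n div n" using ar[OF that] by (intro div_le_mono) simp
      then show ?thesis using n by simp
    qed
    then show ?thesis by (auto simp: j_def)
  qed
  define J where "J = gJ R j"
  define \<xi> where "\<xi> = gxi R j"
  have Jdef: "J = (\<Sum>r\<in>R. j r + 2)" by (simp add: J_def gJ_def)
  have xi_ok: "rational_vec \<xi> \<and> \<xi> \<in> convex hull (rvec ` R)"
    unfolding \<xi>_def gxi_def gJ_def by (rule grid_point[OF fR Rne])
  have bp: "b \<xi> > 0" using bpos xi_ok by blast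
  have Jpos: "J > 0" using fR Rne by (simp add: Jdef sum_pos)
  define L where "L = J * b \<xi>"
  have Ldef: "gL R b j = L" by (simp add: gL_def L_def J_def \<xi>_def)
  have Lpos: "L > 0" using Jpos bp by (simp add: L_def)
  define t where "t = n * J div (K * L) + 1"
  have mdef: "m = L * t" by (simp add: m_def gm_def Ldef t_def J_def)
  have rK: "real K > 0" using K by simp
  have jr_le: "real (j r) \<le> real K * real (a r) / real n" if "r \<in> R" for r
    using div_real_le[OF n, of "K * a r"] that by (simp add: j_def)
  have jr_gt: "real K * real (a r) / real n < real (j r) + 1" if "r \<in> R" for r
    using div_real_gt[OF n, of "K * a r"] that by (simp add: j_def)
  have sumj_le: "(\<Sum>r\<in>R. real (j r)) \<le> real K"
  proof -
    have "(\<Sum>r\<in>R. real (j r)) \<le> (\<Sum>r\<in>R. real K * real (a r) / real n)" by (intro sum_mono jr_le)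
    also have "\<dots> = real K * (\<Sum>r\<in>R. real (a r)) / real n"
      by (simp add: sum_divide_distrib sum_distrib_left)
    also have "(\<Sum>r\<in>R. real (a r)) = real n" using asum by (metis of_nat_sum)
    finally show ?thesis using n by simp
  qed
  have sumj_ge: "real K - real (card R) \<le> (\<Sum>r\<in>R. real (j r))"
  proof -
    have "(\<Sum>r\<in>R. real K * real (a r) / real n - 1) \<le> (\<Sum>r\<in>R. real (j r))"
      by (intro sum_mono) (use jr_gt in fastforce)
    moreover have "(\<Sum>r\<in>R. real K * real (a r) / real n - 1) = real K * (\<Sum>r\<in>R. real (a r)) / real n - real (card R)"
      by (simp add: sum_subtractf sum_divide_distrib sum_distrib_left)
    moreover have "(\<Sum>r\<in>R. real (a r)) = real n" using asum by (metis of_nat_sum)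
    ultimately show ?thesis using n by simp
  qed
  have rJ: "real J = (\<Sum>r\<in>R. real (j r)) + 2 * real (card R)"
    by (simp add: Jdef of_nat_sum sum.distrib)
  have rm_gt: "real m > real n * real J / real K"
  proof -
    have "real n * real J / real K = real L * (real (n * J) / real (K * L))"
      using Lpos rK by (simp add: field_simps)
    also have "\<dots> < real L * (real (n * J div (K * L)) + 1)"
      using div_real_gt[of "K * L" "n * J"] Lpos K by (intro mult_strict_left_mono) auto
    also have "\<dots> = real m" by (simp add: mdef t_def algebra_simps)
    finally show ?thesis .
  qed
  have rm_le: "real m \<le> real n * real J / real K + real L"
  proof -
    have "real m = real L * real (n * J div (K * L)) + real L" by (simp add: mdef t_def algebra_simps)
    also have "real L * real (n * J div (K * L)) \<le> real L * (real (n * J) / real (K * L))"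
      using div_real_le[of "K * L" "n * J"] Lpos K by (intro mult_left_mono) auto
    also have "real L * (real (n * J) / real (K * L)) = real n * real J / real K"
      using Lpos rK by (simp add: field_simps)
    finally show ?thesis by simp
  qed
  have JgeK: "real J \<ge> real K" using rJ sumj_ge by linarith
  have nJK: "real n * real J / real K \<ge> real n" using JgeK rK by (simp add: field_simps mult_right_mono)
  show nm: "n \<le> m" using rm_gt nJK by linarith
  have JleK: "real J \<le> real K + 2 * real (card R)" using rJ sumj_le by linarith
  show "real m \<le> real n + 2 * real (card R) * real n / real K + real (gL R b j)"
  proof -
    have "real n * real J / real K \<le> real n * (real K + 2 * real (card R)) / real K"
      using JleK rK by (intro divide_right_mono mult_left_mono) auto
    also have "\<dots> = real n + 2 * real (card R) * real n / real K" using rK by (simp add: field_simps)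
    finally show ?thesis using rm_le Ldef by simp
  qed
  define f where "f r = (j r + 2) * (m div J)" for r
  have tgt: "(\<Sum>r\<in>R. int (f r) *s r) = xhat \<xi> m" and fsum: "(\<Sum>r\<in>R. f r) = m"
  proof -
    have xp: "\<forall>i. rvec (xhat \<xi> (i * b \<xi>)) = real (i * b \<xi>) *\<^sub>R \<xi>" using xpath xi_ok by blast
    have m2: "m = (\<Sum>r\<in>R. j r + 2) * b \<xi> * t" by (simp add: mdef L_def Jdef)
    have xiJ: "\<xi> = (\<Sum>r\<in>R. (real (j r + 2) / real J) *\<^sub>R rvec r)"
      by (simp add: \<xi>_def gxi_def J_def)
    have m3: "m = J * b \<xi> * t" by (simp add: mdef L_def)
    note G1 = grid_target(1)[OF fR Jdef xiJ xp m3]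
      and G2 = grid_target(2)[OF fR Jdef xiJ xp m3]
    show "(\<Sum>r\<in>R. int (f r) *s r) = xhat \<xi> m"
      unfolding f_def by (rule G1)
    show "(\<Sum>r\<in>R. f r) = m"
      unfolding f_def by (rule G2)
  qed
  have fa: "a r \<le> f r" if "r \<in> R" for r
  proof -
    have mJ: "real (m div J) = real m / real J"
      using Jpos by (simp add: mdef L_def real_of_nat_div)
    have "real (a r) < (real (j r) + 2) * real n / real K"
      using jr_gt[OF that] rK n by (simp add: field_simps)
    also have "\<dots> \<le> (real (j r) + 2) * (real m / real J)"
    proof -
      have "real n / real K \<le> real m / real J" using rm_gt Jpos rK by (simp add: field_simps)
      then have "(real (j r) + 2) * (real n / real K) \<le> (real (j r) + 2) * (real m / real J)"
        by (intro mult_left_mono) auto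
      then show ?thesis by simp
    qed
    also have "\<dots> = real (f r)" proof - have "real (f r) = (real (j r) + 2) * real (m div J)" unfolding f_def by (simp only: of_nat_mult of_nat_add of_nat_numeral) then show ?thesis by (simp only: mJ) qed
    finally show ?thesis by simp
  qed
  obtain rs where rs: "set rs = R - {0}" "distinct rs" using finite_distinct_list[of "R - {0}"] fR by auto
  define e where "e r = f r - a r" for r
  define e0 where "e0 = (if 0 \<in> R then e 0 else 0)"
  have q: "sum_list (map e rs) = (\<Sum>r\<in>R - {0}. e r)" using rs by (simp add: sum_list_distinct_conv_sum_set)
  have esum: "(\<Sum>r\<in>R. e r) = e0 + sum_list (map e rs)"
    using fR by (simp add: q e0_def sum.remove[of R 0] )
  have fae: "f r = a r + e r" if "r \<in> R" for r using fa[OF that] by (simp add: e_def)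
  have msum: "m = e0 + n + sum_list (map e rs)"
  proof -
    have "(\<Sum>r\<in>R. f r) = (\<Sum>r\<in>R. a r + e r)" by (rule sum.cong) (auto simp: fae)
    then have "m = (\<Sum>r\<in>R. a r + e r)" using fsum by simp
    also have "\<dots> = n + (\<Sum>r\<in>R. e r)" by (simp add: sum.distrib asum)
    finally show ?thesis using esum by simp
  qed
  have eb: "e r \<le> m - n" if "r \<in> R" for r
  proof -
    have "e r \<le> (\<Sum>r\<in>R. e r)" using member_le_sum[of r R e] fR that by auto
    then show ?thesis using esum msum by linarith
  qed
  show "\<exists>e0 rs e. (e0 > 0 \<longrightarrow> 0 \<in> R) \<and> set rs \<subseteq> R - {0} \<and> length rs \<le> card R \<and>
          route rs e \<in> paths R (sum_list (map e rs)) \<and>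
          (\<Sum>r\<in>R. int (a r) *s r) + sum_list (route rs e) = xhat (gxi R j) m \<and>
          m = e0 + n + sum_list (map e rs) \<and> e0 \<le> m - n \<and> (\<forall>r\<in>set rs. e r \<le> m - n)"
  proof (intro exI conjI)
    show "e0 > 0 \<longrightarrow> 0 \<in> R" by (simp add: e0_def)
    show "set rs \<subseteq> R - {0}" using rs by simp
    show "length rs \<le> card R" using rs distinct_card[OF rs(2)] fR by (metis card_mono Diff_subset)
    show "route rs e \<in> paths R (sum_list (map e rs))"
      using route_set[of rs e] rs by (auto simp: paths_def route_length)
    show "m = e0 + n + sum_list (map e rs)" by (rule msum)
    show "e0 \<le> m - n" using esum msum by simp
    show "\<forall>r\<in>set rs. e r \<le> m - n" using eb rs by auto
    have "sum_list (route rs e) = (\<Sum>r\<in>R - {0}. int (e r) *s r)"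
      using rs by (simp add: route_sum sum_list_distinct_conv_sum_set)
    also have "\<dots> = (\<Sum>r\<in>R. int (e r) *s r)" using fR by (simp add: sum_diff1)
    finally have "(\<Sum>r\<in>R. int (a r) *s r) + sum_list (route rs e) = (\<Sum>r\<in>R. int (a r) *s r + int (e r) *s r)"
      by (simp add: sum.distrib)
    also have "\<dots> = (\<Sum>r\<in>R. int (f r) *s r)"
      by (rule sum.cong) (auto simp: fae vector_sadd_rdistrib)
    also have "\<dots> = xhat (gxi R j) m" using tgt by (simp add: \<xi>_def)
    finally show "(\<Sum>r\<in>R. int (a r) *s r) + sum_list (route rs e) = xhat (gxi R j) m" .
  qed
qed



lemma step_n:
  fixes \<phi> :: "int^'d \<Rightarrow> (int^'d) list \<Rightarrow> real" and R :: "(int^'d) set"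
  assumes fR: "finite R" and Rne: "R \<noteq> {}" and z0: "z0 \<in> R" "z0 \<noteq> 0"
    and bpos: "\<forall>\<xi>. rational_vec \<xi> \<and> \<xi> \<in> convex hull (rvec ` R) \<longrightarrow>
        0 < b \<xi> \<and> (\<exists>x\<in>Dset R (b \<xi>). rvec x = real (b \<xi>) *\<^sub>R \<xi>)"
    and xpath: "\<forall>\<xi>. rational_vec \<xi> \<and> \<xi> \<in> convex hull (rvec ` R) \<longrightarrow>
        xhat \<xi> 0 = 0 \<and> (\<forall>n. xhat \<xi> (Suc n) - xhat \<xi> n \<in> R) \<and>
        (\<forall>j. rvec (xhat \<xi> (j * b \<xi>)) = real (j * b \<xi>) *\<^sub>R \<xi>)"
    and K: "K > 0" and n: "n > 0"
    and Lm: "\<forall>m\<ge>n. \<forall>y\<in>(\<Union>k\<le>m. Dset R k). \<forall>z\<in>R. z \<noteq> 0 \<longrightarrow> (\<forall>e'. real e' \<le> \<epsilon> * real m \<longrightarrow>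
           (\<Sum>i<e'. Gf R l \<phi> (y + int i *s z)) \<le> real (card (paths R l)) * \<eta> * real m)"
    and en: "1 \<le> \<epsilon> * real n" and eta: "0 \<le> \<eta>"
    and hK: "\<forall>j\<in>PiE R (\<lambda>_. {..K}). 2 * real (card R) * real n / real K + real (gL R b j) \<le> \<epsilon> * real n"
    and rhs: "\<forall>j\<in>PiE R (\<lambda>_. {..K}). \<forall>m\<ge>n. nlog m (E0 R (m + l) (\<lambda>zs. exp (Hs \<phi> l m zs) *
                 (if walkX zs m = xhat (gxi R j) m then 1 else 0))) \<le> ereal c"
  shows "\<exists>m j. j \<in> PiE R (\<lambda>_. {..K}) \<and> n \<le> m \<and>
     real m \<le> real n + 2 * real (card R) * real n / real K + real (gL R b j) \<and>
     E0 R (n + l) (\<lambda>zs. exp (Hs \<phi> l n zs)) > 0 \<and>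
     ln (E0 R (n + l) (\<lambda>zs. exp (Hs \<phi> l n zs))) \<le> ln (real (card (Dset R n))) + c * real m
        + (real m - real n) * (ln (real (card R)) + Gf R l \<phi> 0)
        + (2 * real l + real (card R)) * (real (card (paths R l)) * \<eta> * real m)"
proof -
  define Rc where "Rc = card R"
  have Rc: "Rc > 0" using fR Rne by (simp add: Rc_def card_gt_0_iff)
  define D where "D = Dset R n"
  have fD: "finite D" "D \<noteq> {}" using fR Rne by (auto simp: D_def Dset_finite Dset_nonempty)
  define S where "S x = (\<Sum>zs\<in>{zs\<in>paths R (n + l). walkX zs n = x}. exp (Hs \<phi> l n zs))" for x
  define Stot where "Stot = (\<Sum>zs\<in>paths R (n + l). exp (Hs \<phi> l n zs))"
  have Stot_pos: "Stot > 0" unfolding Stot_def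
    using paths_nonempty[OF Rne] by (intro sum_pos) (auto simp: paths_finite fR)
  have Stot_eq: "Stot = (\<Sum>x\<in>D. S x)"
    unfolding Stot_def S_def
    by (rule sum.group[symmetric]) (auto simp: paths_finite fR D_def Dset_finite intro: walkX_Dset)
  obtain xn where xn: "xn \<in> D" "\<And>x. x \<in> D \<Longrightarrow> S x \<le> S xn"
    using fD Max_in[of "S ` D"] Max_ge[of "S ` D"] by (metis (no_types, lifting) finite_imageI image_iff image_is_empty)
  have Stot_le: "Stot \<le> real (card D) * S xn"
    using Stot_eq sum_bounded_above[of D S "S xn"] xn(2) by auto
  have cardD: "real (card D) > 0" using fD by (simp add: card_gt_0_iff)
  have Sxn_pos: "S xn > 0"
  proof (rule ccontr)
    assume "\<not> S xn > 0"
    then have "real (card D) * S xn \<le> 0" using cardD by (simp add: mult_nonneg_nonpos)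
    then show False using Stot_le Stot_pos by linarith
  qed
  obtain u0 where u0: "u0 \<in> paths R n" "sum_list u0 = xn" using xn(1) by (auto simp: D_def Dset_def)
  define a where "a r = count (mset u0) r" for r
  have su0: "set u0 \<subseteq> R" "length u0 = n" using u0 by (auto simp: paths_def)
  have asum: "(\<Sum>r\<in>R. a r) = n" using length_count[OF fR su0(1)] su0(2) by (simp add: a_def)
  have xn_eq: "xn = (\<Sum>r\<in>R. int (a r) *s r)" using sum_list_count[OF fR su0(1)] u0(2) by (simp add: a_def)
  define j where "j = restrict (\<lambda>r. K * a r div n) R"
  define m where "m = gm R b K j n"
  note C = construct[OF fR Rne K n asum bpos xpath, folded j_def, folded m_def]
  have jg: "j \<in> PiE R (\<lambda>_. {..K})" by (rule C(1))
  have nm: "n \<le> m" by (rule C(2))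
  have mb: "real m \<le> real n + 2 * real (card R) * real n / real K + real (gL R b j)" by (rule C(3))
  obtain e0 rs e where E: "e0 > 0 \<longrightarrow> 0 \<in> R" "set rs \<subseteq> R - {0}" "length rs \<le> card R"
      "route rs e \<in> paths R (sum_list (map e rs))"
      "(\<Sum>r\<in>R. int (a r) *s r) + sum_list (route rs e) = xhat (gxi R j) m"
      "m = e0 + n + sum_list (map e rs)" "e0 \<le> m - n" "\<forall>r\<in>set rs. e r \<le> m - n"
    using C(4) by blast
  define q where "q = sum_list (map e rs)"
  define P where "P = real (card (paths R l))"
  define B where "B = P * \<eta> * real m"
  have B0: "0 \<le> B" using eta by (simp add: B_def P_def)
  have mn_eps: "real m - real n \<le> \<epsilon> * real n" using mb hK jg by fastforce
  have eps0: "\<epsilon> > 0" using en n by (metis mult_nonpos_nonneg not_le of_nat_0_le_iff zero_less_one order.strict_trans1 leI)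
  have em: "\<epsilon> * real n \<le> \<epsilon> * real m" using nm eps0 by simp
  have LmB: "(\<Sum>i<e'. Gf R l \<phi> (y + int i *s z)) \<le> B"
    if "y \<in> (\<Union>k\<le>m. Dset R k)" "z \<in> R" "z \<noteq> 0" "real e' \<le> \<epsilon> * real m" for y z e'
    using Lm[rule_format, OF nm that(1) that(2) that(3) that(4)] by (simp add: B_def P_def)
  have Bb: "Gf R l \<phi> (walkX zs k) \<le> B" if "zs \<in> paths R (n + l)" "k < n" for zs k
  proof -
    have "walkX zs k \<in> (\<Union>k\<le>m. Dset R k)" using walkX_Dset[OF that(1), of k] that(2) nm by auto
    then have "(\<Sum>i<1. Gf R l \<phi> (walkX zs k + int i *s z0)) \<le> B"
      using LmB[of "walkX zs k" z0 1] z0 en em by simp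
    then show ?thesis by simp
  qed
  have Qb: "(\<Sum>k<q. Gf R l \<phi> (xn + walkX (route rs e) k)) \<le> real (card R) * B"
  proof -
    have "(\<Sum>k<length (route rs e). Gf R l \<phi> (xn + walkX (route rs e) k)) \<le> real (length rs) * B"
    proof (rule route_bound[where E = "m - n" and m = m and R = R and k = n])
      fix y z e' assume "y \<in> (\<Union>k\<le>m. Dset R k)" "z \<in> R" "z \<noteq> 0" "e' \<le> m - n"
      moreover have "real e' \<le> \<epsilon> * real m"
        using \<open>e' \<le> m - n\<close> nm mn_eps em by (simp add: of_nat_diff)
      ultimately show "(\<Sum>i<e'. Gf R l \<phi> (y + int i *s z)) \<le> B" by (intro LmB)
    next
      show "set rs \<subseteq> R - {0}" by (rule E(2))
      show "\<forall>r\<in>set rs. e r \<le> m - n" by (rule E(8))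
      show "xn \<in> Dset R n" using xn(1) by (simp add: D_def)
      show "n + sum_list (map e rs) \<le> m" using E(6) by simp
    qed
    also have "\<dots> \<le> real (card R) * B" using E(3) B0 by (simp add: mult_right_mono)
    finally show ?thesis by (simp add: q_def route_length)
  qed
  define Sm where "Sm = (\<Sum>zs\<in>paths R (m + l). exp (Hs \<phi> l m zs) * (if walkX zs m = xhat (gxi R j) m then 1 else 0))"
  have tr: "S xn \<le> exp (real e0 * Gf R l \<phi> 0 + 2 * real l * B + real (card R) * B) * Sm"
    unfolding S_def Sm_def
  proof (rule transfer[OF fR E(1)[rule_format] E(4)])
    show "xn + sum_list (route rs e) = xhat (gxi R j) m" using E(5) xn_eq by simp
    show "m = e0 + n + sum_list (map e rs)" by (rule E(6))
  qed (use Bb Qb B0 in \<open>auto simp: q_def\<close>)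
  have Sm_pos: "Sm > 0"
  proof -
    have "0 < S xn" by (rule Sxn_pos)
    also note tr
    finally show ?thesis by (simp add: zero_less_mult_iff)
  qed
  define Em where "Em = Sm / real Rc ^ (m + l)"
  have Em_pos: "Em > 0" using Sm_pos Rc by (simp add: Em_def)
  have "nlog m Em \<le> ereal c" using rhs jg nm by (simp add: Em_def Sm_def E0_def Rc_def)
  then have lnEm: "ln Em \<le> c * real m"
    using Em_pos n nm by (simp add: nlog_def divide_le_eq split: if_splits)
  have lnSm: "ln Sm = ln Em + real (m + l) * ln (real Rc)"
    using Sm_pos Rc by (simp add: Em_def ln_div ln_realpow)
  have lnS: "ln (S xn) \<le> real e0 * Gf R l \<phi> 0 + 2 * real l * B + real (card R) * B + ln Sm"
  proof -
    have "ln (S xn) \<le> ln (exp (real e0 * Gf R l \<phi> 0 + 2 * real l * B + real (card R) * B) * Sm)"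
      using tr Sxn_pos by simp
    also have "\<dots> = real e0 * Gf R l \<phi> 0 + 2 * real l * B + real (card R) * B + ln Sm"
      using Sm_pos by (simp add: ln_mult)
    finally show ?thesis .
  qed
  have lnStot: "ln Stot \<le> ln (real (card D)) + ln (S xn)"
  proof -
    have "ln Stot \<le> ln (real (card D) * S xn)" using Stot_le Stot_pos by simp
    also have "\<dots> = ln (real (card D)) + ln (S xn)" using cardD Sxn_pos by (simp add: ln_mult)
    finally show ?thesis .
  qed
  define En where "En = E0 R (n + l) (\<lambda>zs. exp (Hs \<phi> l n zs))"
  have En_eq: "En = Stot / real Rc ^ (n + l)" by (simp add: En_def E0_def Stot_def Rc_def)
  have En_pos: "En > 0" using Stot_pos Rc by (simp add: En_eq)
  have lnEn: "ln En = ln Stot - real (n + l) * ln (real Rc)"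
    using Stot_pos Rc by (simp add: En_eq ln_div ln_realpow)
  have e0G: "real e0 * Gf R l \<phi> 0 \<le> (real m - real n) * Gf R l \<phi> 0"
    using E(7) nm by (intro mult_right_mono) (auto simp: Gf_nonneg of_nat_diff)
  have lR0: "0 \<le> ln (real Rc)" using Rc by simp
  have "ln En \<le> ln (real (card D)) + c * real m + (real m - real n) * (ln (real (card R)) + Gf R l \<phi> 0)
        + (2 * real l + real (card R)) * B"
    using lnEn lnStot lnS lnSm lnEm e0G by (simp add: Rc_def algebra_simps)
  then show ?thesis using jg nm mb En_pos
    by (intro exI[of _ m] exI[of _ j]) (simp add: En_def D_def B_def P_def)
qed



lemma ev_ge: "eventually (\<lambda>n. C \<le> real n) sequentially"
proof -
  have "\<forall>n\<ge>nat \<lceil>C\<rceil>. C \<le> real n"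
  proof (intro allI impI)
    fix n assume "nat \<lceil>C\<rceil> \<le> n"
    then have "real_of_int \<lceil>C\<rceil> \<le> real n" by linarith
    then show "C \<le> real n" using le_of_int_ceiling[of C] by linarith
  qed
  then show ?thesis unfolding eventually_sequentially by blast
qed

lemma ev_ln: "A \<ge> 0 \<Longrightarrow> B > 0 \<Longrightarrow> eventually (\<lambda>n. A * ln (real n + 1) \<le> B * real n) sequentially"
proof -
  assume A: "A \<ge> 0" and B: "B > 0"
  have "(\<lambda>n. ln (real n + 1) / real n) \<longlonglongrightarrow> 0" by real_asymp
  then have "eventually (\<lambda>n. ln (real n + 1) / real n < B / (A + 1)) sequentially"
    using A B by (intro order_tendstoD) auto
  then show ?thesis using eventually_gt_at_top[of 0]
  proof (rule eventually_elim2)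
    fix n :: nat assume h: "ln (real n + 1) / real n < B / (A + 1)" and n: "0 < n"
    have l0: "0 \<le> ln (real n + 1)" by simp
    have "ln (real n + 1) < B / (A + 1) * real n" using h n by (simp add: divide_less_eq)
    then have "(A + 1) * ln (real n + 1) < B * real n" using A by (simp add: field_simps)
    moreover have "A * ln (real n + 1) \<le> (A + 1) * ln (real n + 1)" using l0 by (simp add: mult_right_mono)
    ultimately show "A * ln (real n + 1) \<le> B * real n" by linarith
  qed
qed



lemma step_eventually:
  fixes \<phi> :: "int^'d \<Rightarrow> (int^'d) list \<Rightarrow> real" and R :: "(int^'d) set"
  assumes fR: "finite R" and Rne: "R \<noteq> {}" and z0: "z0 \<in> R" "z0 \<noteq> 0"
    and bpos: "\<forall>\<xi>. rational_vec \<xi> \<and> \<xi> \<in> convex hull (rvec ` R) \<longrightarrow>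
        0 < b \<xi> \<and> (\<exists>x\<in>Dset R (b \<xi>). rvec x = real (b \<xi>) *\<^sub>R \<xi>)"
    and xpath: "\<forall>\<xi>. rational_vec \<xi> \<and> \<xi> \<in> convex hull (rvec ` R) \<longrightarrow>
        xhat \<xi> 0 = 0 \<and> (\<forall>n. xhat \<xi> (Suc n) - xhat \<xi> n \<in> R) \<and>
        (\<forall>j. rvec (xhat \<xi> (j * b \<xi>)) = real (j * b \<xi>) *\<^sub>R \<xi>)"
    and hL: "\<forall>w\<in>paths R l. \<forall>z\<in>R. z \<noteq> 0 \<longrightarrow>
      Limsup (at_right (0::real)) (\<lambda>\<epsilon>. Limsup sequentially (\<lambda>n.
           ereal (Max ((\<lambda>x. (1 / real n) * (\<Sum>i\<in>{i::nat. real i \<le> \<epsilon> * real n}.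
                 \<bar>\<phi> (x + int i *s z) w\<bar>)) ` (\<Union>k\<le>n. Dset R k))))) = 0"
    and cb: "\<forall>\<xi>\<in>{\<xi>. rational_vec \<xi> \<and> \<xi> \<in> convex hull (rvec ` R)}.
        Limsup sequentially (\<lambda>n. nlog n (E0 R (n + l)
           (\<lambda>zs. exp (Hs \<phi> l n zs) * (if walkX zs n = xhat \<xi> n then 1 else 0)))) < ereal c"
    and th: "\<theta> > 0"
  shows "eventually (\<lambda>n. nlog n (E0 R (n + l) (\<lambda>zs. exp (Hs \<phi> l n zs))) \<le> ereal (c + \<theta>)) sequentially"
proof -
  define Rc where "Rc = real (card R)"
  have Rc1: "Rc \<ge> 1" using fR Rne by (simp add: Rc_def Suc_le_eq card_gt_0_iff)
  define P where "P = real (card (paths R l))"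
  have P1: "P \<ge> 1" using paths_nonempty[OF Rne, of l] paths_finite[OF fR, of l]
    by (simp add: P_def Suc_le_eq card_gt_0_iff)
  define G0 where "G0 = Gf R l \<phi> 0"
  have G0: "G0 \<ge> 0" by (simp add: G0_def Gf_nonneg)
  define lR where "lR = ln Rc"
  have lR: "lR \<ge> 0" using Rc1 by (simp add: lR_def)
  define Cc where "Cc = \<bar>c\<bar> + lR + G0"
  have Cc: "Cc \<ge> 0" using lR G0 by (simp add: Cc_def)
  define \<eta> where "\<eta> = \<theta> / (8 * (2 * real l + Rc) * P)"
  have eta: "\<eta> > 0" using th Rc1 P1 by (simp add: \<eta>_def)
  have etaeq: "(2 * real l + Rc) * P * \<eta> = \<theta> / 8"
  proof -
    define X where "X = (2 * real l + Rc) * P"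
    have X: "X > 0" using Rc1 P1 by (simp add: X_def)
    have "\<eta> = \<theta> / (8 * X)" unfolding \<eta>_def X_def by (simp only: mult.assoc)
    moreover have "X * (\<theta> / (8 * X)) = \<theta> / 8" using X by (simp add: field_simps)
    ultimately have "X * \<eta> = \<theta> / 8" by simp
    then show ?thesis unfolding X_def .
  qed
  obtain \<epsilon> N1 where ep: "\<epsilon> > 0" and N1: "\<forall>m\<ge>N1. \<forall>y\<in>(\<Union>k\<le>m. Dset R k). \<forall>z\<in>R. z \<noteq> 0 \<longrightarrow> (\<forall>e'. real e' \<le> \<epsilon> * real m \<longrightarrow>
           (\<Sum>i<e'. Gf R l \<phi> (y + int i *s z)) \<le> real (card (paths R l)) * \<eta> * real m)"
    by (rule classL_extract[OF fR hL eta])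
  define \<epsilon>1 where "\<epsilon>1 = min \<epsilon> 1"
  have e1: "\<epsilon>1 > 0" "\<epsilon>1 \<le> 1" "\<epsilon>1 \<le> \<epsilon>" using ep by (auto simp: \<epsilon>1_def)
  define K where "K = nat \<lceil>4 * Rc / \<epsilon>1 + 16 * Rc * Cc / \<theta>\<rceil> + 1"
  have Kpos: "K > 0" by (simp add: K_def)
  have Kge: "real K \<ge> 4 * Rc / \<epsilon>1 + 16 * Rc * Cc / \<theta>"
  proof -
    have "4 * Rc / \<epsilon>1 + 16 * Rc * Cc / \<theta> \<le> real_of_int \<lceil>4 * Rc / \<epsilon>1 + 16 * Rc * Cc / \<theta>\<rceil>"
      by (rule le_of_int_ceiling)
    then show ?thesis unfolding K_def by linarith
  qed
  have t1: "0 \<le> 4 * Rc / \<epsilon>1" "0 \<le> 16 * Rc * Cc / \<theta>" using Rc1 e1 Cc th by auto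
  have K1: "4 * Rc \<le> \<epsilon>1 * real K"
  proof -
    have "4 * Rc / \<epsilon>1 \<le> real K" using Kge t1 by linarith
    then show ?thesis using e1 by (simp add: divide_le_eq mult.commute)
  qed
  have K2: "16 * Rc * Cc \<le> \<theta> * real K"
  proof -
    have "16 * Rc * Cc / \<theta> \<le> real K" using Kge t1 by linarith
    then show ?thesis using th by (simp add: divide_le_eq mult.commute)
  qed
  define grid where "grid = PiE R (\<lambda>_. {..K})"
  have fg: "finite grid" using fR by (simp add: grid_def finite_PiE)
  define RHS where "RHS \<xi> m = nlog m (E0 R (m + l)
           (\<lambda>zs. exp (Hs \<phi> l m zs) * (if walkX zs m = xhat \<xi> m then 1 else 0)))" for \<xi> m
  have "\<forall>j\<in>grid. eventually (\<lambda>m. RHS (gxi R j) m < ereal c) sequentially"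
  proof
    fix j assume "j \<in> grid"
    have "rational_vec (gxi R j) \<and> gxi R j \<in> convex hull (rvec ` R)"
      unfolding gxi_def gJ_def by (rule grid_point[OF fR Rne])
    then have "Limsup sequentially (RHS (gxi R j)) < ereal c" using cb by (simp add: RHS_def[abs_def])
    then show "eventually (\<lambda>m. RHS (gxi R j) m < ereal c) sequentially" by (rule Limsup_lessD)
  qed
  then have "eventually (\<lambda>m. \<forall>j\<in>grid. RHS (gxi R j) m < ereal c) sequentially"
    by (rule eventually_ball_finite[OF fg])
  then obtain M0 where M0: "\<And>m j. m \<ge> M0 \<Longrightarrow> j \<in> grid \<Longrightarrow> RHS (gxi R j) m < ereal c"
    unfolding eventually_sequentially by blast
  define Ls where "Ls = (\<Sum>j\<in>grid. real (gL R b j))"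
  have Ls: "real (gL R b j) \<le> Ls" if "j \<in> grid" for j
    unfolding Ls_def using fg that by (intro member_le_sum) auto
  have Ls0: "Ls \<ge> 0" by (simp add: Ls_def sum_nonneg)
  have ev: "eventually (\<lambda>n. n \<ge> Suc (max N1 M0) \<and> 2 * Ls / \<epsilon>1 \<le> real n \<and> 8 * Cc * Ls / \<theta> \<le> real n
        \<and> 1 / \<epsilon>1 \<le> real n \<and> Rc * ln (real n + 1) \<le> \<theta> / 4 * real n) sequentially"
    by (intro eventually_conj ev_ge ev_ln eventually_ge_at_top) (use Rc1 th in auto)
  show ?thesis using ev
  proof (rule eventually_mono)
    fix n assume h: "n \<ge> Suc (max N1 M0) \<and> 2 * Ls / \<epsilon>1 \<le> real n \<and> 8 * Cc * Ls / \<theta> \<le> real n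
        \<and> 1 / \<epsilon>1 \<le> real n \<and> Rc * ln (real n + 1) \<le> \<theta> / 4 * real n"
    have h1: "Suc (max N1 M0) \<le> n" and h2: "2 * Ls / \<epsilon>1 \<le> real n" and h3: "8 * Cc * Ls / \<theta> \<le> real n"
      and h4: "1 / \<epsilon>1 \<le> real n" and h5: "Rc * ln (real n + 1) \<le> \<theta> / 4 * real n" using h by auto
    have n: "n > 0" using h1 by auto
    have rn: "real n > 0" using n by simp
    have Lm: "\<forall>m\<ge>n. \<forall>y\<in>(\<Union>k\<le>m. Dset R k). \<forall>z\<in>R. z \<noteq> 0 \<longrightarrow> (\<forall>e'. real e' \<le> \<epsilon>1 * real m \<longrightarrow>
           (\<Sum>i<e'. Gf R l \<phi> (y + int i *s z)) \<le> real (card (paths R l)) * \<eta> * real m)"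
    proof (intro allI impI ballI)
      fix m y z e' assume a: "n \<le> m" "y \<in> (\<Union>k\<le>m. Dset R k)" "z \<in> R" "z \<noteq> 0" "real e' \<le> \<epsilon>1 * real m"
      have "\<epsilon>1 * real m \<le> \<epsilon> * real m" using e1 by (simp add: mult_right_mono)
      then have e': "real e' \<le> \<epsilon> * real m" using a(5) by linarith
      have "N1 \<le> m" using a(1) h1 by simp
      then show "(\<Sum>i<e'. Gf R l \<phi> (y + int i *s z)) \<le> real (card (paths R l)) * \<eta> * real m"
        using N1 a(2,3,4) e' by blast
    qed
    have en: "1 \<le> \<epsilon>1 * real n" using h4 e1 by (simp add: divide_le_eq mult.commute)
    have hLs: "2 * Ls \<le> \<epsilon>1 * real n" using h2 e1 by (simp add: divide_le_eq mult.commute)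
    have hK2: "2 * Rc * real n / real K \<le> \<epsilon>1 * real n / 2"
    proof -
      have "2 * Rc * real n * 2 \<le> \<epsilon>1 * real K * real n" using K1 rn by (simp add: mult_right_mono)
      then show ?thesis using Kpos by (simp add: field_simps)
    qed
    have hK: "\<forall>j\<in>PiE R (\<lambda>_. {..K}). 2 * real (card R) * real n / real K + real (gL R b j) \<le> \<epsilon>1 * real n"
    proof
      fix j assume "j \<in> PiE R (\<lambda>_. {..K})"
      then have gl: "real (gL R b j) \<le> Ls" using Ls by (simp add: grid_def)
      show "2 * real (card R) * real n / real K + real (gL R b j) \<le> \<epsilon>1 * real n"
        using hK2 hLs gl unfolding Rc_def by linarith
    qed
    have rhs: "\<forall>j\<in>PiE R (\<lambda>_. {..K}). \<forall>m\<ge>n. nlog m (E0 R (m + l) (\<lambda>zs. exp (Hs \<phi> l m zs) *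
                 (if walkX zs m = xhat (gxi R j) m then 1 else 0))) \<le> ereal c"
    proof (intro ballI allI impI)
      fix j m assume j: "j \<in> PiE R (\<lambda>_. {..K})" and nm: "n \<le> m"
      have "M0 \<le> m" using nm h1 by simp
      then have "RHS (gxi R j) m < ereal c" using M0 j by (simp add: grid_def)
      then show "nlog m (E0 R (m + l) (\<lambda>zs. exp (Hs \<phi> l m zs) *
                 (if walkX zs m = xhat (gxi R j) m then 1 else 0))) \<le> ereal c"
        unfolding RHS_def by (rule less_imp_le)
    qed
    obtain m j where mj: "j \<in> PiE R (\<lambda>_. {..K})" "n \<le> m"
      "real m \<le> real n + 2 * real (card R) * real n / real K + real (gL R b j)"
      "E0 R (n + l) (\<lambda>zs. exp (Hs \<phi> l n zs)) > 0"
      "ln (E0 R (n + l) (\<lambda>zs. exp (Hs \<phi> l n zs))) \<le> ln (real (card (Dset R n))) + c * real m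
        + (real m - real n) * (ln (real (card R)) + Gf R l \<phi> 0)
        + (2 * real l + real (card R)) * (real (card (paths R l)) * \<eta> * real m)"
      using step_n[OF fR Rne z0 bpos xpath Kpos n Lm en less_imp_le[OF eta] hK rhs] by blast
    define d where "d = real m - real n"
    have d0: "d \<ge> 0" using mj(2) by (simp add: d_def)
    have dle: "d \<le> 2 * Rc * real n / real K + Ls" using mj(3) Ls[of j] mj(1) by (simp add: d_def grid_def Rc_def)
    have i2: "Cc * (2 * Rc * real n / real K) \<le> \<theta> * real n / 8"
    proof -
      have "Cc * (2 * Rc * real n / real K) = (16 * Rc * Cc) * real n / (8 * real K)" by (simp add: field_simps)
      also have "\<dots> \<le> (\<theta> * real K) * real n / (8 * real K)"
        using K2 rn Kpos by (intro divide_right_mono mult_right_mono) auto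
      also have "\<dots> = \<theta> * real n / 8" using Kpos by simp
      finally show ?thesis .
    qed
    have i3: "Cc * Ls \<le> \<theta> * real n / 8" using h3 th by (simp add: divide_le_eq mult.commute mult.left_commute)
    have Ccd: "Cc * d \<le> \<theta> * real n / 4"
    proof -
      have "Cc * d \<le> Cc * (2 * Rc * real n / real K + Ls)" using dle Cc by (rule mult_left_mono)
      then show ?thesis using i2 i3 by (simp add: distrib_left)
    qed
    have m2n: "real m \<le> 2 * real n"
    proof -
      have "d \<le> \<epsilon>1 * real n" using dle hK2 hLs by linarith
      also have "\<dots> \<le> real n" using e1 rn by (simp add: mult_le_cancel_right1)
      finally show ?thesis by (simp add: d_def)
    qed
    have i5: "(2 * real l + Rc) * (P * \<eta> * real m) \<le> \<theta> * real n / 4"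
    proof -
      have "(2 * real l + Rc) * (P * \<eta> * real m) = \<theta> / 8 * real m" using etaeq by (simp add: ac_simps)
      also have "\<dots> \<le> \<theta> / 8 * (2 * real n)" using m2n th by (intro mult_left_mono) auto
      finally show ?thesis by simp
    qed
    have i6: "ln (real (card (Dset R n))) \<le> \<theta> * real n / 4"
    proof -
      have cpos: "card (Dset R n) > 0" using Dset_finite[OF fR] Dset_nonempty[OF Rne] by (simp add: card_gt_0_iff)
      have "real (card (Dset R n)) \<le> (real n + 1) ^ card R"
        using card_Dset[OF fR, of n] by (metis of_nat_Suc of_nat_le_iff of_nat_power Suc_eq_plus1 add.commute)
      then have "ln (real (card (Dset R n))) \<le> ln ((real n + 1) ^ card R)" using cpos by simp
      also have "\<dots> = Rc * ln (real n + 1)" by (simp add: ln_realpow Rc_def)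
      finally show ?thesis using h5 by simp
    qed
    have cm: "c * real m \<le> c * real n + \<bar>c\<bar> * d"
    proof -
      have "c * real m = c * real n + c * d" by (simp add: d_def algebra_simps)
      moreover have "c * d \<le> \<bar>c\<bar> * d" using d0 by (simp add: mult_right_mono)
      ultimately show ?thesis by linarith
    qed
    have main: "ln (E0 R (n + l) (\<lambda>zs. exp (Hs \<phi> l n zs))) \<le> (c + \<theta>) * real n"
    proof -
      have "(real m - real n) * (ln (real (card R)) + Gf R l \<phi> 0) = (lR + G0) * d"
        by (simp add: d_def lR_def Rc_def G0_def)
      moreover have "\<bar>c\<bar> * d + (lR + G0) * d = Cc * d" by (simp add: Cc_def algebra_simps)
      moreover have "(2 * real l + real (card R)) * (real (card (paths R l)) * \<eta> * real m)
          = (2 * real l + Rc) * (P * \<eta> * real m)" by (simp add: P_def Rc_def)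
      moreover have "(c + \<theta>) * real n = c * real n + \<theta> * real n" by (simp add: algebra_simps)
      moreover have "0 \<le> \<theta> * real n" using th rn by simp
      ultimately show ?thesis using mj(5) i5 i6 cm Ccd by linarith
    qed
    show "nlog n (E0 R (n + l) (\<lambda>zs. exp (Hs \<phi> l n zs))) \<le> ereal (c + \<theta>)"
      using main mj(4) rn by (simp add: nlog_def divide_le_eq)
  qed
qed



lemma main_omega:
  fixes \<phi> :: "int^'d \<Rightarrow> (int^'d) list \<Rightarrow> real" and R :: "(int^'d) set"
  assumes fR: "finite R" and Rne: "R \<noteq> {}" and z0: "z0 \<in> R" "z0 \<noteq> 0"
    and bpos: "\<forall>\<xi>. rational_vec \<xi> \<and> \<xi> \<in> convex hull (rvec ` R) \<longrightarrow>
        0 < b \<xi> \<and> (\<exists>x\<in>Dset R (b \<xi>). rvec x = real (b \<xi>) *\<^sub>R \<xi>)"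
    and xpath: "\<forall>\<xi>. rational_vec \<xi> \<and> \<xi> \<in> convex hull (rvec ` R) \<longrightarrow>
        xhat \<xi> 0 = 0 \<and> (\<forall>n. xhat \<xi> (Suc n) - xhat \<xi> n \<in> R) \<and>
        (\<forall>j. rvec (xhat \<xi> (j * b \<xi>)) = real (j * b \<xi>) *\<^sub>R \<xi>)"
    and hL: "\<forall>w\<in>paths R l. \<forall>z\<in>R. z \<noteq> 0 \<longrightarrow>
      Limsup (at_right (0::real)) (\<lambda>\<epsilon>. Limsup sequentially (\<lambda>n.
           ereal (Max ((\<lambda>x. (1 / real n) * (\<Sum>i\<in>{i::nat. real i \<le> \<epsilon> * real n}.
                 \<bar>\<phi> (x + int i *s z) w\<bar>)) ` (\<Union>k\<le>n. Dset R k))))) = 0"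
  shows "Limsup sequentially (\<lambda>n. nlog n (E0 R (n + l) (\<lambda>zs. exp (Hs \<phi> l n zs))))
    \<le> (SUP \<xi>\<in>{\<xi>. rational_vec \<xi> \<and> \<xi> \<in> convex hull (rvec ` R)}.
         Limsup sequentially (\<lambda>n. nlog n (E0 R (n + l)
           (\<lambda>zs. exp (Hs \<phi> l n zs) * (if walkX zs n = xhat \<xi> n then 1 else 0)))))"
    (is "?L \<le> ?S")
proof (rule dense_ge)
  fix y assume Sy: "?S < y"
  show "?L \<le> y"
  proof (cases y)
    case PInf then show ?thesis by simp
  next
    case MInf then show ?thesis using Sy by simp
  next
    case (real yr)
    obtain w where w: "?S < w" "w < y" using Sy dense by blast
    obtain c where wc: "w = ereal c" using w real by (cases w) auto
    have cb: "\<forall>\<xi>\<in>{\<xi>. rational_vec \<xi> \<and> \<xi> \<in> convex hull (rvec ` R)}.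
        Limsup sequentially (\<lambda>n. nlog n (E0 R (n + l)
           (\<lambda>zs. exp (Hs \<phi> l n zs) * (if walkX zs n = xhat \<xi> n then 1 else 0)))) < ereal c"
    proof
      fix \<xi> assume "\<xi> \<in> {\<xi>. rational_vec \<xi> \<and> \<xi> \<in> convex hull (rvec ` R)}"
      then have "Limsup sequentially (\<lambda>n. nlog n (E0 R (n + l)
           (\<lambda>zs. exp (Hs \<phi> l n zs) * (if walkX zs n = xhat \<xi> n then 1 else 0)))) \<le> ?S"
        by (rule SUP_upper)
      then show "Limsup sequentially (\<lambda>n. nlog n (E0 R (n + l)
           (\<lambda>zs. exp (Hs \<phi> l n zs) * (if walkX zs n = xhat \<xi> n then 1 else 0)))) < ereal c"
        using w(1) wc by simp
    qed
    have th: "yr - c > 0" using w(2) wc real by simp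
    have "eventually (\<lambda>n. nlog n (E0 R (n + l) (\<lambda>zs. exp (Hs \<phi> l n zs))) \<le> ereal (c + (yr - c))) sequentially"
      by (rule step_eventually[OF fR Rne z0 bpos xpath hL cb th])
    then have "?L \<le> ereal (c + (yr - c))" by (rule Limsup_bounded)
    then show ?thesis using real by simp
  qed
qed

lemma sum_list_zeros: "set xs \<subseteq> {0} \<Longrightarrow> sum_list xs = 0"
  by (induction xs) auto

lemma trivial_case:
  fixes \<phi> :: "int^'d \<Rightarrow> (int^'d) list \<Rightarrow> real" and R :: "(int^'d) set"
  assumes R0: "R = {0}"
    and xpath: "\<forall>\<xi>. rational_vec \<xi> \<and> \<xi> \<in> convex hull (rvec ` R) \<longrightarrow>
        xhat \<xi> 0 = 0 \<and> (\<forall>n. xhat \<xi> (Suc n) - xhat \<xi> n \<in> R) \<and>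
        (\<forall>j. rvec (xhat \<xi> (j * b \<xi>)) = real (j * b \<xi>) *\<^sub>R \<xi>)"
  shows "Limsup sequentially (\<lambda>n. nlog n (E0 R (n + l) (\<lambda>zs. exp (Hs \<phi> l n zs))))
    \<le> (SUP \<xi>\<in>{\<xi>. rational_vec \<xi> \<and> \<xi> \<in> convex hull (rvec ` R)}.
         Limsup sequentially (\<lambda>n. nlog n (E0 R (n + l)
           (\<lambda>zs. exp (Hs \<phi> l n zs) * (if walkX zs n = xhat \<xi> n then 1 else 0)))))"
proof -
  have x0: "rational_vec 0 \<and> (0::real^'d) \<in> convex hull (rvec ` R)"
    using R0 by (simp add: rational_vec_def rvec_zero)
  have xh: "xhat 0 n = 0" for n
  proof (induction n)
    case 0 then show ?case using xpath x0 by blast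
  next
    case (Suc n)
    have "xhat 0 (Suc n) - xhat 0 n \<in> R" using xpath x0 by blast
    then show ?case using Suc R0 by simp
  qed
  have eq: "E0 R (n + l) (\<lambda>zs. exp (Hs \<phi> l n zs)) =
        E0 R (n + l) (\<lambda>zs. exp (Hs \<phi> l n zs) * (if walkX zs n = xhat 0 n then 1 else 0))" for n
  proof -
    have "walkX zs n = 0" if "zs \<in> paths R (n + l)" for zs
      using that R0 unfolding walkX_def paths_def by (intro sum_list_zeros) (auto dest: in_set_takeD)
    then show ?thesis unfolding E0_def by (intro arg_cong2[where f = "(/)"] sum.cong) (auto simp: xh)
  qed
  have "Limsup sequentially (\<lambda>n. nlog n (E0 R (n + l) (\<lambda>zs. exp (Hs \<phi> l n zs))))
      = Limsup sequentially (\<lambda>n. nlog n (E0 R (n + l)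
           (\<lambda>zs. exp (Hs \<phi> l n zs) * (if walkX zs n = xhat 0 n then 1 else 0))))"
    by (simp only: eq)
  also have "\<dots> \<le> (SUP \<xi>\<in>{\<xi>. rational_vec \<xi> \<and> \<xi> \<in> convex hull (rvec ` R)}.
         Limsup sequentially (\<lambda>n. nlog n (E0 R (n + l)
           (\<lambda>zs. exp (Hs \<phi> l n zs) * (if walkX zs n = xhat \<xi> n then 1 else 0)))))"
    by (rule SUP_upper) (use x0 in simp)
  finally show ?thesis .
qed

theorem lemma2p8:
  fixes M :: "'a measure" and R :: "(int ^ 'd) set" and T :: "int ^ 'd \<Rightarrow> 'a \<Rightarrow> 'a"
    and l :: nat and g :: "'a \<Rightarrow> (int ^ 'd) list \<Rightarrow> real"
    and b :: "real ^ 'd \<Rightarrow> nat" and xhat :: "real ^ 'd \<Rightarrow> nat \<Rightarrow> int ^ 'd"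
  assumes R: "finite R" "R \<noteq> {}"
    and sys: "ergodic_system M (gen_group R) T"
    and gmeas: "\<forall>zs\<in>paths R l. (\<lambda>\<omega>. g \<omega> zs) \<in> borel_measurable M"
    and gL: "classL M R T l g"
    and bpos: "\<forall>\<xi>. rational_vec \<xi> \<and> \<xi> \<in> convex hull (rvec ` R) \<longrightarrow>
        0 < b \<xi> \<and> (\<exists>x\<in>Dset R (b \<xi>). rvec x = real (b \<xi>) *\<^sub>R \<xi>)"
    and xpath: "\<forall>\<xi>. rational_vec \<xi> \<and> \<xi> \<in> convex hull (rvec ` R) \<longrightarrow>
        xhat \<xi> 0 = 0 \<and> (\<forall>n. xhat \<xi> (Suc n) - xhat \<xi> n \<in> R) \<and>
        (\<forall>j. rvec (xhat \<xi> (j * b \<xi>)) = real (j * b \<xi>) *\<^sub>R \<xi>)"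
  shows "AE \<omega> in M.
    Limsup sequentially (\<lambda>n. nlog n (E0 R (n + l) (\<lambda>zs. exp (nRn T g l n \<omega> zs))))
    \<le> (SUP \<xi>\<in>{\<xi>. rational_vec \<xi> \<and> \<xi> \<in> convex hull (rvec ` R)}.
         Limsup sequentially (\<lambda>n. nlog n (E0 R (n + l)
           (\<lambda>zs. exp (nRn T g l n \<omega> zs) * (if walkX zs n = xhat \<xi> n then 1 else 0)))))"
proof -
  define Q where "Q w z \<omega> \<longleftrightarrow> Limsup (at_right (0::real)) (\<lambda>\<epsilon>. Limsup sequentially (\<lambda>n.
           ereal (Max ((\<lambda>x. (1 / real n) * (\<Sum>i\<in>{i::nat. real i \<le> \<epsilon> * real n}.
                 \<bar>g (T (x + int i *s z) \<omega>) w\<bar>)) ` (\<Union>k\<le>n. Dset R k))))) = 0" for w z \<omega>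
  have AEQ: "AE \<omega> in M. \<forall>w\<in>paths R l. \<forall>z\<in>R. z \<noteq> 0 \<longrightarrow> Q w z \<omega>"
  proof (rule AE_finite_allI[OF paths_finite[OF R(1)]])
    fix w assume w: "w \<in> paths R l"
    show "AE \<omega> in M. \<forall>z\<in>R. z \<noteq> 0 \<longrightarrow> Q w z \<omega>"
    proof (rule AE_finite_allI[OF R(1)])
      fix z assume z: "z \<in> R"
      show "AE \<omega> in M. z \<noteq> 0 \<longrightarrow> Q w z \<omega>"
      proof (cases "z = 0")
        case True then show ?thesis by simp
      next
        case False
        have "classL1 M R T (\<lambda>\<omega>. g \<omega> w)" using gL w by (simp add: classL_def)
        then have "\<forall>z\<in>R. z \<noteq> 0 \<longrightarrow> (AE \<omega> in M. Q w z \<omega>)"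
          unfolding classL1_def Q_def by (rule conjunct2)
        then have "AE \<omega> in M. Q w z \<omega>" using z False by blast
        then show ?thesis by (rule eventually_mono) simp
      qed
    qed
  qed
  show ?thesis using AEQ
  proof (rule eventually_mono)
    fix \<omega> assume h: "\<forall>w\<in>paths R l. \<forall>z\<in>R. z \<noteq> 0 \<longrightarrow> Q w z \<omega>"
    have eq: "nRn T g l n \<omega> zs = Hs (\<lambda>y w. g (T y \<omega>) w) l n zs" for n zs
      by (simp add: nRn_def Hs_def)
    show "Limsup sequentially (\<lambda>n. nlog n (E0 R (n + l) (\<lambda>zs. exp (nRn T g l n \<omega> zs))))
    \<le> (SUP \<xi>\<in>{\<xi>. rational_vec \<xi> \<and> \<xi> \<in> convex hull (rvec ` R)}.
         Limsup sequentially (\<lambda>n. nlog n (E0 R (n + l)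
           (\<lambda>zs. exp (nRn T g l n \<omega> zs) * (if walkX zs n = xhat \<xi> n then 1 else 0)))))"
    proof (cases "\<exists>z0\<in>R. z0 \<noteq> 0")
      case True
      then obtain z0 where z0: "z0 \<in> R" "z0 \<noteq> 0" by blast
      show ?thesis unfolding eq
        by (rule main_omega[where \<phi>="\<lambda>y w. g (T y \<omega>) w", OF R(1) R(2) z0 bpos xpath h[unfolded Q_def]])
    next
      case False
      then have "R = {0}" using R(2) by auto
      then show ?thesis unfolding eq by (rule trivial_case) (rule xpath)
    qed
  qed
qed


end
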